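(* The topology on $\mathrm{Aut}^*(X,\nu)$ induced from the weak operator topology on $\mathrm{Isom}(L^1(X,\nu))$ (the very weak topology) is not a group topology; more precisely, the multiplication map $\mathrm{Aut}^*(X,\nu)\times\mathrm{Aut}^*(X,\nu)\to\mathrm{Aut}^*(X,\nu)$ is not jointly continuous.
   Context: $(X,\nu)$ is a standard nonatomic Lebesgue probability space; $\mathrm{Aut}^*(X,\nu)$ is the group of invertible nonsingular transformations (those $T$ with $T_*\nu$ equivalent to $\nu$), identified when equal a.e. It embeds in $\mathrm{Isom}(L^1(X,\nu))$ via $T\mapsto U_{T,1}$, $U_{T,1}f=\frac{dT_*\nu}{d\nu}\cdot f\circ T^{-1}$. The weak operator topology on $\mathrm{Isom}(L^1)$: $U_n\to U$ iff $\int (U_nf)h\,d\nu\to\int(Uf)h\,d\nu$ for all $f\in L^1$, $h\in L^\infty$. *)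

theory Defs
  imports "HOL-Probability.Probability"
begin

text \<open>The standard nonatomic Lebesgue probability space, realised as [0,1] with Lebesgue measure.\<close>
definition nu01 :: "real measure" where
  "nu01 = restrict_space lborel {0..1}"

definition nonsing_aut :: "'a measure \<Rightarrow> ('a \<Rightarrow> 'a) set" where
  "nonsing_aut M = {T. bij_betw T (space M) (space M) \<and> T \<in> M \<rightarrow>\<^sub>M M
      \<and> inv_into (space M) T \<in> M \<rightarrow>\<^sub>M M
      \<and> (\<forall>A\<in>sets M. emeasure (distr M M T) A = 0 \<longleftrightarrow> emeasure M A = 0)}"

definition U_op :: "'a measure \<Rightarrow> ('a \<Rightarrow> 'a) \<Rightarrow> ('a \<Rightarrow> real) \<Rightarrow> 'a \<Rightarrow> real" where
  "U_op M T f x = enn2real (RN_deriv M (distr M M T) x) * f (inv_into (space M) T x)"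

definition Linfty :: "'a measure \<Rightarrow> ('a \<Rightarrow> real) set" where
  "Linfty M = {h. h \<in> borel_measurable M \<and> (\<exists>C. AE x in M. \<bar>h x\<bar> \<le> C)}"

definition wot_pairs :: "'a measure \<Rightarrow> (('a \<Rightarrow> real) \<times> ('a \<Rightarrow> real)) set" where
  "wot_pairs M = {(f, h). integrable M f \<and> h \<in> Linfty M}"

text \<open>The very weak topology: the topology on Aut*(X,nu) induced from the weak operator topology,
  i.e. the coarsest topology making all maps T |-> \<integral> (U_T f) h continuous.\<close>
definition very_weak_topology :: "'a measure \<Rightarrow> ('a \<Rightarrow> 'a) topology" where
  "very_weak_topology M =
     pullback_topology (nonsing_aut M)
       (\<lambda>T. restrict (\<lambda>(f, h). LINT x|M. U_op M T f x * h x) (wot_pairs M))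
       (product_topology (\<lambda>_. euclideanreal) (wot_pairs M))"

end

theory Submission
  imports Defs
begin

lemma space_nu01[simp]: "space nu01 = {0..1}"
  by (simp add: nu01_def space_restrict_space)

lemma sets_nu01: "sets nu01 = sets (restrict_space borel {0..1::real})"
  by (simp add: nu01_def sets_restrict_space)

lemma sets_nu01_iff: "B \<in> sets nu01 \<longleftrightarrow> B \<in> sets borel \<and> B \<subseteq> {0..1}"
  by (auto simp add: nu01_def sets_restrict_space_iff)

lemma emeasure_nu01: "B \<subseteq> {0..1} \<Longrightarrow> emeasure nu01 B = emeasure lborel B"
  unfolding nu01_def by (rule emeasure_restrict_space) auto

lemma measure_nu01: "B \<subseteq> {0..1} \<Longrightarrow> measure nu01 B = measure lborel B"
  by (simp add: measure_def emeasure_nu01)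

lemma prob_nu01: "prob_space nu01"
  by (rule prob_spaceI) (simp add: emeasure_nu01)

interpretation nu: prob_space nu01 by (rule prob_nu01)

lemma nonsing_autD:
  assumes "R \<in> nonsing_aut M"
  shows "bij_betw R (space M) (space M)" "R \<in> M \<rightarrow>\<^sub>M M"
    "inv_into (space M) R \<in> M \<rightarrow>\<^sub>M M"
    "\<And>A. A \<in> sets M \<Longrightarrow> emeasure (distr M M R) A = 0 \<longleftrightarrow> emeasure M A = 0"
  using assms by (auto simp: nonsing_aut_def)

lemma AE_nonsing:
  assumes R: "R \<in> nonsing_aut M" and ae: "AE x in M. P x"
  shows "AE x in M. P (R x)"
proof -
  obtain N where N: "{x\<in>space M. \<not> P x} \<subseteq> N" "N \<in> sets M" "emeasure M N = 0"
    using ae by (auto simp: eventually_ae_filter)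
  have "emeasure (distr M M R) N = 0" using nonsing_autD(4)[OF R N(2)] N(3) by simp
  then have "emeasure M (R -` N \<inter> space M) = 0"
    using nonsing_autD(2)[OF R] N(2) by (simp add: emeasure_distr)
  moreover have "R -` N \<inter> space M \<in> sets M" using nonsing_autD(2)[OF R] N(2) by measurable
  moreover have "{x\<in>space M. \<not> P (R x)} \<subseteq> R -` N \<inter> space M"
    using N(1) nonsing_autD(2)[OF R] by (auto simp: measurable_def)
  ultimately show ?thesis unfolding eventually_ae_filter null_sets_def by blast
qed

lemma U_op_integral:
  assumes R: "R \<in> nonsing_aut nu01" and f: "integrable nu01 f" and h: "h \<in> borel_measurable nu01"
  shows "(LINT x|nu01. U_op nu01 R f x * h x) = (LINT x|nu01. f x * h (R x))"
proof -
  let ?M = nu01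
  let ?N = "distr ?M ?M R"
  let ?r = "RN_deriv ?M ?N"
  let ?i = "inv_into (space ?M) R"
  have Rm: "R \<in> ?M \<rightarrow>\<^sub>M ?M" and im: "?i \<in> ?M \<rightarrow>\<^sub>M ?M" and bij: "bij_betw R (space ?M) (space ?M)"
    using nonsing_autD[OF R] by auto
  have sN: "sets ?N = sets ?M" by simp
  have ac: "absolutely_continuous ?M ?N"
    unfolding absolutely_continuous_def
  proof
    fix A assume "A \<in> null_sets ?M"
    then show "A \<in> null_sets ?N" using nonsing_autD(4)[OF R, of A] by (auto simp: null_sets_def)
  qed
  have fN: "finite_measure ?N" by (rule nu.finite_measure_distr[OF Rm])
  have dens: "density ?M ?r = ?N"
    by (rule nu.density_RN_deriv[OF ac sN])
  have fin: "AE x in ?M. ?r x \<noteq> \<infinity>"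
    by (rule nu.RN_deriv_finite[OF _ ac sN]) (use fN finite_measure.sigma_finite_measure in auto)
  have "density ?M (\<lambda>x. ennreal (enn2real (?r x))) = density ?M ?r"
    by (rule density_cong) (use fin in \<open>auto simp: less_top[symmetric] intro: ennreal_enn2real\<close>)
  then have dens2: "density ?M (\<lambda>x. ennreal (enn2real (?r x))) = ?N" using dens by simp
  define g where "g y = f (?i y) * h y" for y
  have fm: "f \<in> borel_measurable ?M" using f by auto
  have gm: "g \<in> borel_measurable ?M" unfolding g_def
    using fm h im by measurable
  have "(LINT y|?N. g y) = (LINT x|?M. g (R x))"
    by (rule integral_distr[OF Rm gm])
  also have "\<dots> = (LINT x|?M. f x * h (R x))"
    by (rule Bochner_Integration.integral_cong)
       (use bij in \<open>auto simp: g_def inv_into_f_f bij_betw_def\<close>)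
  finally have 1: "(LINT y|?N. g y) = (LINT x|?M. f x * h (R x))" .
  have "(LINT y|?N. g y) = (LINT y|?M. enn2real (?r y) *\<^sub>R g y)"
    by (subst dens2[symmetric], rule integral_density) (use gm in auto)
  also have "\<dots> = (LINT x|?M. U_op ?M R f x * h x)"
    by (simp add: U_op_def g_def mult.assoc)
  finally show ?thesis using 1 by simp
qed

lemma abs_cont_nu:
  fixes f :: "real \<Rightarrow> real"
  assumes f: "integrable nu01 f" and e: "e > 0"
  shows "\<exists>d>0. \<forall>Z\<in>sets nu01. measure nu01 Z < d \<longrightarrow> (LINT x|nu01. indicator Z x * \<bar>f x\<bar>) < e"
proof -
  have fm[measurable]: "f \<in> borel_measurable nu01" using f by auto
  define s where "s n x = abs (f x) - min (abs (f x)) (real n)" for n x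
  have sm[measurable]: "s n \<in> borel_measurable nu01" for n unfolding s_def by measurable
  have "(\<lambda>n. integral\<^sup>L nu01 (s n)) \<longlonglongrightarrow> integral\<^sup>L nu01 (\<lambda>x. 0)"
  proof (rule integral_dominated_convergence[where w="\<lambda>x. \<bar>f x\<bar>"])
    show "integrable nu01 (\<lambda>x. \<bar>f x\<bar>)" using f by auto
    show "AE x in nu01. (\<lambda>n. s n x) \<longlonglongrightarrow> 0"
    proof (rule AE_I2)
      fix x
      obtain N :: nat where N: "\<bar>f x\<bar> \<le> real N" using real_arch_simple by blast
      have "eventually (\<lambda>n. s n x = 0) sequentially"
        unfolding eventually_sequentially
        by (rule exI[of _ N]) (use N in \<open>auto simp: s_def min_def\<close>)
      then show "(\<lambda>n. s n x) \<longlonglongrightarrow> 0" by (rule tendsto_eventually)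
    qed
    show "AE x in nu01. norm (s n x) \<le> \<bar>f x\<bar>" for n by (auto simp: s_def min_def)
  qed auto
  then have "(\<lambda>n. integral\<^sup>L nu01 (s n)) \<longlonglongrightarrow> 0" by simp
  then obtain N where N: "\<And>n. n \<ge> N \<Longrightarrow> \<bar>integral\<^sup>L nu01 (s n)\<bar> < e/2"
    using e unfolding LIMSEQ_def dist_real_def by (metis diff_zero half_gt_zero)
  have sN: "integral\<^sup>L nu01 (s N) < e/2" using N[of N] by simp
  have si: "integrable nu01 (s N)"
    by (rule Bochner_Integration.integrable_bound[OF integrable_abs[OF f]]) (auto simp: s_def min_def)
  define d where "d = e / (2 * (real N + 1))"
  have d: "d > 0" using e by (simp add: d_def)
  show ?thesis
  proof (intro exI[of _ d] conjI d ballI impI)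
    fix Z assume Z: "Z \<in> sets nu01" and mZ: "measure nu01 Z < d"
    have iZ: "integrable nu01 (\<lambda>x. indicator Z x * real N)" using Z by (intro integrable_mult_left integrable_real_indicator) (auto simp: less_top[symmetric])
    have "(LINT x|nu01. indicator Z x * \<bar>f x\<bar>) \<le> (LINT x|nu01. s N x + indicator Z x * real N)"
    proof (rule integral_mono)
      show "integrable nu01 (\<lambda>x. indicator Z x * \<bar>f x\<bar>)"
        by (rule Bochner_Integration.integrable_bound[OF integrable_abs[OF f]]) (use Z in \<open>auto simp: indicator_def\<close>)
      show "integrable nu01 (\<lambda>x. s N x + indicator Z x * real N)" using si iZ by auto
      show "indicator Z x * \<bar>f x\<bar> \<le> s N x + indicator Z x * real N" for x
        by (auto simp: s_def indicator_def min_def)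
    qed
    also have "\<dots> = integral\<^sup>L nu01 (s N) + measure nu01 Z * real N"
      using si iZ Z sets.sets_into_space[OF Z] by (simp add: Bochner_Integration.integral_add Int_absorb2)
    also have "\<dots> < e/2 + d * (real N + 1)"
    proof -
      have "measure nu01 Z * real N \<le> d * real N" using mZ by (intro mult_right_mono) auto
      also have "\<dots> \<le> d * (real N + 1)" using d by auto
      finally show ?thesis using sN by linarith
    qed
    also have "\<dots> = e" unfolding d_def by (simp add: field_simps)
    finally show "(LINT x|nu01. indicator Z x * \<bar>f x\<bar>) < e" .
  qed
qed

definition moved :: "(real \<Rightarrow> real) \<Rightarrow> real set set \<Rightarrow> real set" where
  "moved R BB = (\<Union>B\<in>BB. {x\<in>{0..1}. (R x \<in> B) \<noteq> (x \<in> B)})"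

lemma moved_sets:
  assumes R: "R \<in> nonsing_aut nu01" and BB: "finite BB" "BB \<subseteq> sets nu01"
  shows "moved R BB \<in> sets nu01"
proof -
  have Rm: "R \<in> nu01 \<rightarrow>\<^sub>M nu01" using nonsing_autD(2)[OF R] .
  have "{x\<in>{0..1}. (R x \<in> B) \<noteq> (x \<in> B)} \<in> sets nu01" if "B \<in> BB" for B
  proof -
    have B: "B \<in> sets nu01" using that BB by auto
    have "{x\<in>{0..1}. (R x \<in> B) \<noteq> (x \<in> B)} = {x\<in>space nu01. \<not> (R x \<in> B \<longleftrightarrow> x \<in> B)}" by auto
    also have "\<dots> \<in> sets nu01" using Rm B by measurable
    finally show ?thesis .
  qed
  then show ?thesis unfolding moved_def using BB by (intro sets.finite_UN) auto
qed

lemma pair_control: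
  fixes f h :: "real \<Rightarrow> real"
  assumes f: "integrable nu01 f" and h: "h \<in> Linfty nu01" and e: "e > 0"
  shows "\<exists>BB d. finite BB \<and> BB \<subseteq> sets nu01 \<and> d > 0 \<and>
    (\<forall>R\<in>nonsing_aut nu01. measure nu01 (moved R BB) < d \<longrightarrow>
       \<bar>(LINT x|nu01. f x * h (R x)) - (LINT x|nu01. f x * h x)\<bar> < e)"
proof -
  have fm[measurable]: "f \<in> borel_measurable nu01" using f by auto
  have hm[measurable]: "h \<in> borel_measurable nu01" using h by (auto simp: Linfty_def)
  obtain C0 where C0: "AE x in nu01. \<bar>h x\<bar> \<le> C0" using h by (auto simp: Linfty_def)
  define C where "C = max C0 0"
  have C: "C \<ge> 0" "AE x in nu01. \<bar>h x\<bar> \<le> C" using C0 by (auto simp: C_def)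
  define h' where "h' x = max (-C) (min C (h x))" for x
  have h'm[measurable]: "h' \<in> borel_measurable nu01" unfolding h'_def by measurable
  have h'b: "\<bar>h' x\<bar> \<le> C" for x using C by (auto simp: h'_def)
  have hh': "AE x in nu01. h x = h' x" using C(2) by eventually_elim (auto simp: h'_def)
  define nf where "nf = (LINT x|nu01. \<bar>f x\<bar>)"
  have nf: "nf \<ge> 0" unfolding nf_def by auto
  obtain m :: nat where m: "real m > 2 * (nf + 1) / e" using reals_Archimedean2 by blast
  have mpos: "real m > 0" using m nf e by (smt (verit) divide_pos_pos)
  have m1: "nf / real m < e / 2"
  proof -
    have "2 * (nf + 1) < e * real m" using m e by (simp add: field_simps)
    then have "2 * nf < e * real m" by (simp add: algebra_simps)
    then show ?thesis using mpos by (simp add: field_simps)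
  qed
  define M :: int where "M = \<lceil>real m * C\<rceil> + 1"
  define B where "B i = {x\<in>{0..1}. real_of_int i \<le> real m * h' x \<and> real m * h' x < real_of_int i + 1}" for i :: int
  define BB where "BB = B ` {-M..M}"
  have Bs: "B i \<in> sets nu01" for i
  proof -
    have "B i = {x\<in>space nu01. real_of_int i \<le> real m * h' x \<and> real m * h' x < real_of_int i + 1}"
      by (auto simp: B_def)
    also have "\<dots> \<in> sets nu01" by measurable
    finally show ?thesis .
  qed
  have BB: "finite BB" "BB \<subseteq> sets nu01" using Bs by (auto simp: BB_def)
  obtain d where d: "d > 0" and dZ: "\<And>Z. Z \<in> sets nu01 \<Longrightarrow> measure nu01 Z < d \<Longrightarrow>
      (LINT x|nu01. indicator Z x * \<bar>f x\<bar>) < e / (2 * (2 * C + 1))"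
    using abs_cont_nu[OF f, of "e / (2 * (2 * C + 1))"] e C by (auto simp: divide_pos_pos)
  show ?thesis
  proof (intro exI[of _ BB] exI[of _ d] conjI BB d ballI impI)
    fix R assume R: "R \<in> nonsing_aut nu01" and mR: "measure nu01 (moved R BB) < d"
    let ?Z = "moved R BB"
    have Zs: "?Z \<in> sets nu01" by (rule moved_sets[OF R BB])
    have Rm[measurable]: "R \<in> nu01 \<rightarrow>\<^sub>M nu01" using nonsing_autD(2)[OF R] .
    have Rsp: "R x \<in> {0..1}" if "x \<in> {0..1}" for x
      using nonsing_autD(1)[OF R] that by (auto simp: bij_betw_def)
    have key: "\<bar>h' (R x) - h' x\<bar> \<le> 1 / real m + 2 * C * indicator ?Z x" if x: "x \<in> {0..1}" for x
    proof (cases "x \<in> ?Z")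
      case True
      have z: "0 \<le> 1 / real m" using mpos by auto
      have a: "\<bar>h' (R x) - h' x\<bar> \<le> 2 * C" using h'b[of "R x"] h'b[of x] by (auto simp: abs_le_iff)
      have "\<bar>h' (R x) - h' x\<bar> \<le> 1 / real m + 2 * C" using a z by linarith
      then show ?thesis using True by simp
    next
      case False
      define i where "i = \<lfloor>real m * h' x\<rfloor>"
      have i1: "real_of_int i \<le> real m * h' x" "real m * h' x < real_of_int i + 1"
        unfolding i_def by linarith+
      have "\<bar>real m * h' x\<bar> \<le> real m * C" using h'b[of x] mpos by (simp add: abs_mult)
      then have "\<bar>i\<bar> \<le> M" using i1 unfolding M_def by linarith
      then have iM: "i \<in> {-M..M}" by auto
      have xB: "x \<in> B i" using x i1 by (auto simp: B_def)
      have "R x \<in> B i" using False xB iM x unfolding moved_def BB_def by blast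
      then have i2: "real_of_int i \<le> real m * h' (R x)" "real m * h' (R x) < real_of_int i + 1"
        by (auto simp: B_def)
      have "\<bar>real m * h' (R x) - real m * h' x\<bar> < 1" using i1 i2 by linarith
      then have "real m * \<bar>h' (R x) - h' x\<bar> < 1" by (simp add: right_diff_distrib[symmetric] abs_mult)
      then have "\<bar>h' (R x) - h' x\<bar> < 1 / real m" using mpos by (simp add: field_simps)
      then show ?thesis using False by simp
    qed
    have pb: "norm (f x * h' y) \<le> norm (C * f x)" for x y
      using mult_left_mono[OF h'b[of y], of "\<bar>f x\<bar>"] C by (simp add: abs_mult mult.commute)
    have i1: "integrable nu01 (\<lambda>x. f x * h' (R x))"
      by (rule Bochner_Integration.integrable_bound[where f="\<lambda>x. C * f x"])
         (use f pb in \<open>auto intro!: AE_I2\<close>)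
    have i2: "integrable nu01 (\<lambda>x. f x * h' x)"
      by (rule Bochner_Integration.integrable_bound[where f="\<lambda>x. C * f x"])
         (use f pb in \<open>auto intro!: AE_I2\<close>)
    have e1: "(LINT x|nu01. f x * h (R x)) = (LINT x|nu01. f x * h' (R x))"
      by (rule integral_cong_AE) (use AE_nonsing[OF R hh'] in auto)
    have e2: "(LINT x|nu01. f x * h x) = (LINT x|nu01. f x * h' x)"
      by (rule integral_cong_AE) (use hh' in auto)
    have iZ: "integrable nu01 (\<lambda>x. indicator ?Z x * \<bar>f x\<bar>)"
      by (rule Bochner_Integration.integrable_bound[OF integrable_abs[OF f]]) (use Zs in \<open>auto simp: indicator_def\<close>)
    have iB: "integrable nu01 (\<lambda>x. \<bar>f x\<bar> / real m + 2 * C * (indicator ?Z x * \<bar>f x\<bar>))"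
      using f iZ by auto
    have "\<bar>(LINT x|nu01. f x * h (R x)) - (LINT x|nu01. f x * h x)\<bar>
        = \<bar>LINT x|nu01. f x * (h' (R x) - h' x)\<bar>"
      using i1 i2 by (simp add: e1 e2 right_diff_distrib)
    also have "\<dots> \<le> (LINT x|nu01. \<bar>f x\<bar> / real m + 2 * C * (indicator ?Z x * \<bar>f x\<bar>))"
    proof (rule integral_abs_bound_integral)
      show "integrable nu01 (\<lambda>x. f x * (h' (R x) - h' x))" using i1 i2 by (simp add: right_diff_distrib)
      show "integrable nu01 (\<lambda>x. \<bar>f x\<bar> / real m + 2 * C * (indicator ?Z x * \<bar>f x\<bar>))" by (rule iB)
      fix x assume "x \<in> space nu01"
      then have "\<bar>h' (R x) - h' x\<bar> \<le> 1 / real m + 2 * C * indicator ?Z x" using key by auto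
      then have "\<bar>f x\<bar> * \<bar>h' (R x) - h' x\<bar> \<le> \<bar>f x\<bar> * (1 / real m + 2 * C * indicator ?Z x)"
        by (intro mult_left_mono) auto
      moreover have "\<bar>f x\<bar> * (1 / real m + 2 * C * indicator ?Z x) = \<bar>f x\<bar> / real m + 2 * C * (indicator ?Z x * \<bar>f x\<bar>)"
        by (simp add: distrib_left)
      ultimately show "\<bar>f x * (h' (R x) - h' x)\<bar> \<le> \<bar>f x\<bar> / real m + 2 * C * (indicator ?Z x * \<bar>f x\<bar>)"
        by (simp only: abs_mult)
    qed
    also have "\<dots> = nf / real m + 2 * C * (LINT x|nu01. indicator ?Z x * \<bar>f x\<bar>)"
      using f iZ by (simp add: nf_def)
    also have "\<dots> < e / 2 + 2 * C * (e / (2 * (2 * C + 1)))"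
    proof -
      have "(LINT x|nu01. indicator ?Z x * \<bar>f x\<bar>) < e / (2 * (2 * C + 1))" by (rule dZ[OF Zs mR])
      then have "2 * C * (LINT x|nu01. indicator ?Z x * \<bar>f x\<bar>) \<le> 2 * C * (e / (2 * (2 * C + 1)))"
        using C by (intro mult_left_mono) auto
      then show ?thesis using m1 by linarith
    qed
    also have "\<dots> \<le> e"
    proof -
      have "2 * C * (e / (2 * (2 * C + 1))) = e / 2 * (2 * C / (2 * C + 1))" using C by (simp add: field_simps)
      also have "\<dots> \<le> e / 2 * 1" using C e by (intro mult_left_mono) auto
      finally show ?thesis by simp
    qed
    finally show "\<bar>(LINT x|nu01. f x * h (R x)) - (LINT x|nu01. f x * h x)\<bar> < e" .
  qed
qed

lemma measure_nu01_le_lborel: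
  assumes X: "X \<in> sets borel" "X \<subseteq> {0..1}" and XY: "X \<subseteq> Y" and Y: "Y \<in> sets borel"
    and c: "emeasure lborel Y \<le> ennreal c" "c \<ge> 0"
  shows "measure nu01 X \<le> c"
proof -
  have "ennreal (measure nu01 X) = emeasure nu01 X" by (simp add: nu.emeasure_eq_measure)
  also have "\<dots> = emeasure lborel X" using X by (simp add: emeasure_nu01)
  also have "\<dots> \<le> emeasure lborel Y" using XY Y by (intro emeasure_mono) auto
  also have "\<dots> \<le> ennreal c" by (rule c)
  finally show ?thesis using c by (simp add: ennreal_le_iff)
qed

definition cell :: "nat \<Rightarrow> real \<Rightarrow> int" where
  "cell n x = \<lfloor>2^n * x\<rfloor>"

definition cellinv :: "nat \<Rightarrow> real set \<Rightarrow> bool" where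
  "cellinv n G \<longleftrightarrow> G \<subseteq> {0..<1} \<and> G \<in> sets borel \<and>
     (\<forall>x\<in>{0..<1}. \<forall>y\<in>{0..<1}. cell n x = cell n y \<longrightarrow> (x \<in> G \<longleftrightarrow> y \<in> G))"

lemma floor_level:
  fixes x :: real
  assumes "n \<le> N"
  shows "\<lfloor>2^n * x\<rfloor> = \<lfloor>2^N * x\<rfloor> div 2^(N-n)"
proof -
  have e: "(2::real)^N = 2^n * 2^(N-n)" using assms by (simp add: power_add[symmetric])
  have "(2::real)^N * x / real_of_int (2^(N-n)) = 2^n * x"
    unfolding e by simp
  then have "\<lfloor>2^n * x\<rfloor> = \<lfloor>(2::real)^N * x / real_of_int (2^(N-n))\<rfloor>" by simp
  also have "\<dots> = \<lfloor>2^N * x\<rfloor> div 2^(N-n)" by (rule floor_divide_real_eq_div) simp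
  finally show ?thesis .
qed

lemma cell_level: "n \<le> N \<Longrightarrow> cell N x = cell N y \<Longrightarrow> cell n x = cell n y"
  unfolding cell_def using floor_level[of n N x] floor_level[of n N y] by simp

lemma cellinv_mono: "cellinv n G \<Longrightarrow> n \<le> N \<Longrightarrow> cellinv N G"
  unfolding cellinv_def using cell_level[of n N] by meson

lemma cellinv_empty: "cellinv n {}" by (simp add: cellinv_def)

lemma cellinv_compl:
  assumes "cellinv n G" shows "cellinv n ({0..<1} - G)"
  unfolding cellinv_def
proof (intro conjI ballI impI)
  have G: "G \<in> sets borel" and inv: "\<And>x y. x \<in> {0..<1} \<Longrightarrow> y \<in> {0..<1} \<Longrightarrow> cell n x = cell n y \<Longrightarrow> (x \<in> G \<longleftrightarrow> y \<in> G)"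
    using assms unfolding cellinv_def by blast+
  show "{0..<1} - G \<subseteq> {0..<1}" by (rule Diff_subset)
  show "{0..<1} - G \<in> sets borel" using G by (intro sets.Diff) auto
  fix x y assume "x \<in> {0..<1::real}" "y \<in> {0..<1::real}" "cell n x = cell n y"
  then show "(x \<in> {0..<1} - G) = (y \<in> {0..<1} - G)" using inv[of x y] by blast
qed

lemma cellinv_UN:
  assumes I: "finite I" and c: "\<And>i. i \<in> I \<Longrightarrow> cellinv n (G i)"
  shows "cellinv n (\<Union>i\<in>I. G i)"
  unfolding cellinv_def
proof (intro conjI ballI impI)
  have G: "\<And>i. i \<in> I \<Longrightarrow> G i \<in> sets borel" and sub: "\<And>i. i \<in> I \<Longrightarrow> G i \<subseteq> {0..<1}"
    and inv: "\<And>i x y. i \<in> I \<Longrightarrow> x \<in> {0..<1} \<Longrightarrow> y \<in> {0..<1} \<Longrightarrow> cell n x = cell n y \<Longrightarrow> (x \<in> G i \<longleftrightarrow> y \<in> G i)"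
    using c unfolding cellinv_def by blast+
  show "(\<Union>i\<in>I. G i) \<subseteq> {0..<1}" using sub by blast
  show "(\<Union>i\<in>I. G i) \<in> sets borel" using G I by (intro sets.finite_UN) auto
  fix x y assume "x \<in> {0..<1::real}" "y \<in> {0..<1::real}" "cell n x = cell n y"
  then show "(x \<in> (\<Union>i\<in>I. G i)) = (y \<in> (\<Union>i\<in>I. G i))" using inv[of _ x y] by blast
qed

definition symd :: "'a set \<Rightarrow> 'a set \<Rightarrow> 'a set" where
  "symd A B = (A - B) \<union> (B - A)"

definition approx_grid :: "real set \<Rightarrow> bool" where
  "approx_grid B \<longleftrightarrow> (\<forall>e>0. \<exists>n G. cellinv n G \<and> measure nu01 (symd B G \<inter> {0..1}) < e)"

lemma cell_measurable[measurable]: "cell n \<in> borel \<rightarrow>\<^sub>M count_space UNIV"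
proof -
  have "cell n = floor \<circ> (\<lambda>x::real. 2^n * x)" by (auto simp: cell_def)
  moreover have "floor \<circ> (\<lambda>x::real. 2^n * x) \<in> borel \<rightarrow>\<^sub>M count_space UNIV"
    by (rule measurable_comp[OF _ measurable_real_floor]) simp
  ultimately show ?thesis by simp
qed

lemma cell_bounds: "real_of_int (cell n x) / 2^n \<le> x" "x < real_of_int (cell n x) / 2^n + 1 / 2^n"
proof -
  have "real_of_int (cell n x) \<le> 2^n * x" "2^n * x < real_of_int (cell n x) + 1"
    unfolding cell_def by linarith+
  then show "real_of_int (cell n x) / 2^n \<le> x" "x < real_of_int (cell n x) / 2^n + 1 / 2^n"
    by (simp_all add: field_simps)
qed

lemma approx_interval: "approx_grid {a..b}"
  unfolding approx_grid_def
proof (intro allI impI)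
  fix e :: real assume e: "e > 0"
  obtain n :: nat where n: "(1/2) ^ n < e / 2"
    using real_arch_pow_inv[of "e/2" "1/2"] e by auto
  define L :: real where "L = 1 / 2^n"
  have L: "L < e / 2" "L > 0" using n by (auto simp: L_def power_one_over)
  define G where "G = {x\<in>{0..<1::real}. a \<le> real_of_int (cell n x) / 2^n \<and> real_of_int (cell n x) / 2^n \<le> b}"
  have Gb: "G \<in> sets borel"
  proof -
    have "G = {x\<in>space borel. x \<in> {0..<1::real} \<and> a \<le> real_of_int (cell n x) / 2^n \<and> real_of_int (cell n x) / 2^n \<le> b}"
      by (simp add: G_def)
    also have "\<dots> \<in> sets borel" by measurable
    finally show ?thesis .
  qed
  have cG: "cellinv n G" unfolding cellinv_def
  proof (intro conjI ballI impI)
    show "G \<subseteq> {0..<1}" by (auto simp: G_def)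
    show "G \<in> sets borel" by (rule Gb)
    fix x y assume "x \<in> {0..<1::real}" "y \<in> {0..<1::real}" "cell n x = cell n y"
    then show "(x \<in> G) = (y \<in> G)" unfolding G_def by simp
  qed
  have sub: "symd {a..b} G \<inter> {0..1} \<subseteq> {a..a+L} \<union> {b..b+L} \<union> {1}"
  proof
    fix x assume x: "x \<in> symd {a..b} G \<inter> {0..1}"
    have b1: "real_of_int (cell n x) / 2^n \<le> x" "x < real_of_int (cell n x) / 2^n + L"
      using cell_bounds[where n=n and x=x] by (auto simp: L_def)
    show "x \<in> {a..a+L} \<union> {b..b+L} \<union> {1}"
    proof (cases "x = 1")
      case True then show ?thesis by simp
    next
      case False
      then have x01: "x \<in> {0..<1}" using x by auto
      show ?thesis
      proof (cases "x \<in> {a..b}")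
        case True
        then have "x \<notin> G" using x by (auto simp: symd_def)
        then have "\<not> (a \<le> real_of_int (cell n x) / 2^n \<and> real_of_int (cell n x) / 2^n \<le> b)"
          using x01 by (simp add: G_def)
        then have "x \<in> {a..a+L}" using True b1 by auto
        then show ?thesis by simp
      next
        case False
        then have "x \<in> G" using x by (auto simp: symd_def)
        then have "a \<le> real_of_int (cell n x) / 2^n" "real_of_int (cell n x) / 2^n \<le> b"
          by (simp_all add: G_def)
        then have "x \<in> {b..b+L}" using False b1 by auto
        then show ?thesis by simp
      qed
    qed
  qed
  have "measure nu01 (symd {a..b} G \<inter> {0..1}) \<le> 2 * L"
  proof (rule measure_nu01_le_lborel[OF _ _ sub])
    show "symd {a..b} G \<inter> {0..1} \<in> sets borel" using Gb
      by (auto simp: symd_def)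
    have "emeasure lborel ({a..a+L} \<union> {b..b+L} \<union> {1}) \<le> emeasure lborel ({a..a+L} \<union> {b..b+L}) + emeasure lborel {1::real}"
      by (rule emeasure_subadditive) auto
    also have "\<dots> \<le> emeasure lborel {a..a+L} + emeasure lborel {b..b+L} + 0"
      by (intro add_mono emeasure_subadditive) auto
    also have "\<dots> = ennreal (2 * L)" using L by (simp add: ennreal_plus[symmetric] del: ennreal_plus)
    finally show "emeasure lborel ({a..a+L} \<union> {b..b+L} \<union> {1}) \<le> ennreal (2 * L)" .
  qed (use L in auto)
  also have "\<dots> < e" using L by simp
  finally show "\<exists>n G. cellinv n G \<and> measure nu01 (symd {a..b} G \<inter> {0..1}) < e" using cG by blast
qed

lemma measure_nu01_singleton[simp]: "measure nu01 {x} = 0"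
proof (cases "x \<in> {0..1}")
  case True then show ?thesis by (simp add: measure_nu01)
next
  case False then show ?thesis by (simp add: measure_notin_sets sets_nu01_iff)
qed

lemma approx_compl:
  assumes A: "A \<in> sets borel" and ap: "approx_grid A"
  shows "approx_grid (-A)"
  unfolding approx_grid_def
proof (intro allI impI)
  fix e :: real assume e: "e > 0"
  obtain n G where G: "cellinv n G" and mG: "measure nu01 (symd A G \<inter> {0..1}) < e"
    using ap e unfolding approx_grid_def by blast
  have Gb: "G \<in> sets borel" "G \<subseteq> {0..<1}" using G unfolding cellinv_def by blast+
  let ?G = "{0..<1} - G"
  have sub: "symd (-A) ?G \<inter> {0..1} \<subseteq> (symd A G \<inter> {0..1}) \<union> {1}"
    using Gb(2) by (auto simp: symd_def)
  have X: "symd A G \<inter> {0..1} \<in> sets nu01" using A Gb by (auto simp: sets_nu01_iff symd_def)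
  have O: "{1::real} \<in> sets nu01" by (simp add: sets_nu01_iff)
  have "measure nu01 (symd (-A) ?G \<inter> {0..1}) \<le> measure nu01 ((symd A G \<inter> {0..1}) \<union> {1})"
    by (rule nu.finite_measure_mono[OF sub sets.Un[OF X O]])
  also have "\<dots> \<le> measure nu01 (symd A G \<inter> {0..1}) + measure nu01 {1}"
    using \<open>symd A G \<inter> {0..1} \<in> sets nu01\<close> by (intro measure_Un_le) (auto simp: sets_nu01_iff)
  also have "\<dots> < e" using mG by simp
  finally show "\<exists>n G. cellinv n G \<and> measure nu01 (symd (-A) G \<inter> {0..1}) < e"
    using cellinv_compl[OF G] by blast
qed

lemma approx_union:
  assumes disj: "disjoint_family f" and fb: "\<And>i. f i \<in> sets borel" and ap: "\<And>i. approx_grid (f i)"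
  shows "approx_grid (\<Union>i::nat. f i)"
  unfolding approx_grid_def
proof (intro allI impI)
  fix e :: real assume e: "e > 0"
  define I :: "real set" where "I = {0..1}"
  define A where "A k = (\<Union>i<k. f i) \<inter> I" for k
  have As: "A k \<in> sets nu01" for k using fb by (auto simp: A_def I_def sets_nu01_iff)
  have inc: "incseq A" unfolding A_def incseq_def by (auto, meson lessThan_iff less_le_trans)
  have UA: "(\<Union>k. A k) = (\<Union>i. f i) \<inter> I" unfolding A_def by auto
  have "(\<lambda>k. measure nu01 (A k)) \<longlonglongrightarrow> measure nu01 (\<Union>k. A k)"
    by (rule nu.finite_Lim_measure_incseq) (use As inc in auto)
  then obtain k where k: "\<bar>measure nu01 (A k) - measure nu01 ((\<Union>i. f i) \<inter> I)\<bar> < e / 2"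
    using e unfolding UA LIMSEQ_def dist_real_def by (metis half_gt_zero order_refl)
  have Us: "(\<Union>i. f i) \<inter> I \<in> sets nu01" using fb by (auto simp: I_def sets_nu01_iff)
  have AU: "A k \<subseteq> (\<Union>i. f i) \<inter> I" by (auto simp: A_def)
  define T where "T = (\<Union>i. f i) \<inter> I - A k"
  have Ts: "T \<in> sets nu01" using Us As unfolding T_def by auto
  have mT: "measure nu01 T < e / 2"
  proof -
    have "measure nu01 T = measure nu01 ((\<Union>i. f i) \<inter> I) - measure nu01 (A k)"
      unfolding T_def by (rule nu.finite_measure_Diff[OF Us As AU])
    then show ?thesis using k by linarith
  qed
  define e' where "e' = e / (2 * (real k + 1))"
  have e': "e' > 0" using e by (simp add: e'_def)
  have "\<forall>i. \<exists>n G. cellinv n G \<and> measure nu01 (symd (f i) G \<inter> {0..1}) < e'"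
    using ap e' unfolding approx_grid_def by blast
  then obtain nn GG where nG: "\<And>i. cellinv (nn i) (GG i)" and mG: "\<And>i. measure nu01 (symd (f i) (GG i) \<inter> {0..1}) < e'"
    by metis
  define N where "N = (\<Sum>i<k. nn i)"
  define G where "G = (\<Union>i\<in>{..<k}. GG i)"
  have cG: "cellinv N G" unfolding G_def
  proof (rule cellinv_UN)
    fix i assume "i \<in> {..<k}"
    then have "nn i \<le> N" unfolding N_def by (intro member_le_sum) auto
    then show "cellinv N (GG i)" using cellinv_mono[OF nG] by blast
  qed simp
  have GGb: "GG i \<in> sets borel" for i using nG[of i] unfolding cellinv_def by blast
  have Ds: "symd (f i) (GG i) \<inter> {0..1} \<in> sets nu01" for i
    using fb[of i] GGb[of i] by (auto simp: sets_nu01_iff symd_def)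
  have UDs: "(\<Union>i\<in>{..<k}. symd (f i) (GG i) \<inter> {0..1}) \<in> sets nu01"
    using Ds by (intro sets.finite_UN) auto
  have sub: "symd (\<Union>i. f i) G \<inter> {0..1} \<subseteq> T \<union> (\<Union>i\<in>{..<k}. symd (f i) (GG i) \<inter> {0..1})"
  proof
    fix x assume x: "x \<in> symd (\<Union>i. f i) G \<inter> {0..1}"
    show "x \<in> T \<union> (\<Union>i\<in>{..<k}. symd (f i) (GG i) \<inter> {0..1})"
    proof (cases "x \<in> (\<Union>i. f i)")
      case True
      then have xG: "x \<notin> G" using x by (auto simp: symd_def)
      show ?thesis
      proof (cases "x \<in> A k")
        case True
        then obtain i where "i < k" "x \<in> f i" by (auto simp: A_def)
        then show ?thesis using xG x by (auto simp: G_def symd_def)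
      next
        case False
        then show ?thesis using True x by (auto simp: T_def I_def)
      qed
    next
      case False
      then have "x \<in> G" using x by (auto simp: symd_def)
      then obtain i where "i < k" "x \<in> GG i" by (auto simp: G_def)
      then show ?thesis using False x by (auto simp: symd_def)
    qed
  qed
  have "measure nu01 (symd (\<Union>i. f i) G \<inter> {0..1}) \<le> measure nu01 (T \<union> (\<Union>i\<in>{..<k}. symd (f i) (GG i) \<inter> {0..1}))"
    by (rule nu.finite_measure_mono[OF sub sets.Un[OF Ts UDs]])
  also have "\<dots> \<le> measure nu01 T + measure nu01 (\<Union>i\<in>{..<k}. symd (f i) (GG i) \<inter> {0..1})"
    by (rule measure_Un_le[OF Ts UDs])
  also have "\<dots> \<le> measure nu01 T + (\<Sum>i<k. measure nu01 (symd (f i) (GG i) \<inter> {0..1}))"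
    using measure_UNION_le[of "{..<k}" "\<lambda>i. symd (f i) (GG i) \<inter> {0..1}" nu01] Ds by auto
  also have "\<dots> \<le> measure nu01 T + (\<Sum>i<k. e')"
    using mG by (intro add_left_mono sum_mono) (auto intro: less_imp_le)
  also have "\<dots> = measure nu01 T + real k * e'" by simp
  also have "\<dots> < e / 2 + e / 2"
  proof -
    have "real k * e' = e / 2 * (real k / (real k + 1))" using e by (simp add: e'_def field_simps)
    also have "\<dots> \<le> e / 2 * 1" using e by (intro mult_left_mono) auto
    finally show ?thesis using mT by linarith
  qed
  finally show "\<exists>n G. cellinv n G \<and> measure nu01 (symd (\<Union>i. f i) G \<inter> {0..1}) < e"
    using cG by auto
qed

lemma approx_borel:
  assumes "B \<in> sets borel" shows "approx_grid B"
  using assms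
proof (induction rule: borel_set_induct)
  case empty
  show ?case unfolding approx_grid_def
  proof (intro allI impI)
    fix e :: real assume "e > 0"
    then show "\<exists>n G. cellinv n G \<and> measure nu01 (symd {} G \<inter> {0..1}) < e"
      using cellinv_empty[of 0] by (intro exI[of _ 0] exI[of _ "{}"]) (auto simp: symd_def)
  qed
next
  case (interval a b) show ?case by (rule approx_interval)
next
  case (compl A) then show ?case by (rule approx_compl)
next
  case (union f) then show ?case by (intro approx_union) auto
qed

definition Eset :: "nat \<Rightarrow> nat \<Rightarrow> real set" where
  "Eset n K = {y. 2^n * y - real_of_int (cell n y) < 1 / real K}"

lemma Eset_borel[measurable]: "Eset n K \<in> sets borel"
proof -
  have "Eset n K = {y\<in>space borel. 2^n * y - real_of_int (cell n y) < 1 / real K}"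
    by (simp add: Eset_def)
  also have "\<dots> \<in> sets borel" by measurable
  finally show ?thesis .
qed

lemma cell_eqI: "real_of_int m \<le> 2^n * y \<Longrightarrow> 2^n * y < real_of_int m + 1 \<Longrightarrow> cell n y = m"
  unfolding cell_def by (simp add: floor_eq_iff)

lemma cell_range:
  fixes m :: int
  assumes "real_of_int m / 2^n \<le> y" "y < (real_of_int m + 1) / 2^n"
  shows "cell n y = m"
  using assms by (intro cell_eqI) (simp_all add: field_simps)

lemma Eset_Ico:
  fixes m :: int
  assumes K: "K > 0"
  shows "Eset n K \<inter> {real_of_int m / 2^n ..< (real_of_int m + 1) / 2^n} =
         {real_of_int m / 2^n ..< real_of_int m / 2^n + 1 / (2^n * real K)}"
proof -
  have K1: "1 / real K \<le> 1" using K by auto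
  have "y \<in> Eset n K \<longleftrightarrow> y < real_of_int m / 2^n + 1 / (2^n * real K)"
    if y: "real_of_int m / 2^n \<le> y" "y < (real_of_int m + 1) / 2^n" for y
  proof -
    have c: "cell n y = m" by (rule cell_range[OF y])
    have "y \<in> Eset n K \<longleftrightarrow> 2^n * y - real_of_int m < 1 / real K" by (simp add: Eset_def c)
    also have "\<dots> \<longleftrightarrow> y < real_of_int m / 2^n + 1 / (2^n * real K)"
      by (simp add: field_simps)
    finally show ?thesis .
  qed
  moreover have "real_of_int m / 2^n + 1 / (2^n * real K) \<le> (real_of_int m + 1) / 2^n"
  proof -
    have "1 / (2^n * real K) \<le> 1 / 2^n" using K by (simp add: field_simps)
    then show ?thesis by (simp add: add_divide_distrib)
  qed
  ultimately show ?thesis by fastforce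
qed

lemma nonneg_aux: fixes x :: real assumes "real m \<le> x * 2^n" shows "0 \<le> x"
proof -
  have "0 \<le> x * 2^n" using assms by (meson of_nat_0_le_iff order_trans)
  then show ?thesis using divide_nonneg_pos[OF \<open>0 \<le> x * 2^n\<close>, of "2^n"] by simp
qed

lemma emeasure_Eset_Ico:
  assumes K: "K > 0"
  shows "emeasure lborel (Eset n K \<inter> {0..<real m / 2^n}) = ennreal (real m / (2^n * real K))"
proof (induction m)
  case 0
  then show ?case by simp
next
  case (Suc m)
  have split: "Eset n K \<inter> {0..<real (Suc m) / 2^n} =
      (Eset n K \<inter> {0..<real m / 2^n}) \<union> (Eset n K \<inter> {real_of_int (int m) / 2^n ..< (real_of_int (int m) + 1) / 2^n})"
    by (auto simp: field_simps intro: nonneg_aux)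
  have disj: "(Eset n K \<inter> {0..<real m / 2^n}) \<inter> (Eset n K \<inter> {real_of_int (int m) / 2^n ..< (real_of_int (int m) + 1) / 2^n}) = {}"
    by auto
  have "emeasure lborel (Eset n K \<inter> {0..<real (Suc m) / 2^n}) =
      emeasure lborel (Eset n K \<inter> {0..<real m / 2^n}) + emeasure lborel (Eset n K \<inter> {real_of_int (int m) / 2^n ..< (real_of_int (int m) + 1) / 2^n})"
    unfolding split by (rule plus_emeasure[symmetric]) (use disj in auto)
  also have "\<dots> = ennreal (real m / (2^n * real K)) + ennreal (1 / (2^n * real K))"
    unfolding Suc.IH Eset_Ico[OF K] by simp
  also have "\<dots> = ennreal (real (Suc m) / (2^n * real K))"
    by (simp add: ennreal_plus[symmetric] add_divide_distrib del: ennreal_plus)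
  finally show ?case .
qed

lemma emeasure_Eset_Icc:
  assumes K: "K > 0"
  shows "emeasure lborel (Eset n K \<inter> {0..real m / 2^n}) = ennreal (real m / (2^n * real K))"
proof -
  have "Eset n K \<inter> {0..real m / 2^n} = (Eset n K \<inter> {0..<real m / 2^n}) \<union> (Eset n K \<inter> {real m / 2^n})"
    by auto
  moreover have "emeasure lborel ((Eset n K \<inter> {0..<real m / 2^n}) \<union> (Eset n K \<inter> {real m / 2^n})) =
      emeasure lborel (Eset n K \<inter> {0..<real m / 2^n})"
    by (rule emeasure_Un_null_set)
       (use emeasure_mono[of "Eset n K \<inter> {real m / 2^n}" "{real m / 2^n}" lborel] in \<open>auto simp: null_sets_def\<close>)
  ultimately show ?thesis using emeasure_Eset_Ico[OF K] by simp
qed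

lemma mono_on_measurable_nu01:
  assumes m: "mono_on {0..1} f" and r: "\<And>x. x \<in> {0..1} \<Longrightarrow> f x \<in> {0..1::real}"
  shows "f \<in> nu01 \<rightarrow>\<^sub>M nu01"
proof -
  have "f \<in> restrict_space borel {0..1} \<rightarrow>\<^sub>M borel" by (rule borel_measurable_mono_on_fnc[OF m])
  then have "f \<in> restrict_space borel {0..1} \<rightarrow>\<^sub>M restrict_space borel {0..1}"
    using measurable_restrict_space2[of f "restrict_space borel {0..1}" "{0..1}" borel] r
    by (auto simp: space_restrict_space)
  then show ?thesis using measurable_cong_sets[OF sets_nu01 sets_nu01] by simp
qed

locale TS =
  fixes n K :: nat
  assumes n1: "n \<ge> 1" and K2: "K \<ge> 2"
begin

definition E where "E = Eset n K"

definition Q :: "real \<Rightarrow> real" where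
  "Q y = y / 2 + real K / 2 * measure nu01 (E \<inter> {0..y})"

lemma Kpos: "K > 0" using K2 by simp

lemma E_borel[measurable]: "E \<in> sets borel" by (simp add: E_def)

lemma measure_E_grid:
  assumes "m \<le> 2^n"
  shows "measure nu01 (E \<inter> {0..real m / 2^n}) = real m / (2^n * real K)"
proof -
  have sub: "E \<inter> {0..real m / 2^n} \<subseteq> {0..1}"
  proof -
    have "real m / 2^n \<le> 1" using assms by (simp add: field_simps)
    then show ?thesis by (meson IntD2 atLeastAtMost_iff order_trans subsetI)
  qed
  have "measure nu01 (E \<inter> {0..real m / 2^n}) = measure lborel (E \<inter> {0..real m / 2^n})"
    by (rule measure_nu01[OF sub])
  also have "\<dots> = real m / (2^n * real K)"
    using emeasure_Eset_Icc[OF Kpos, of n m] by (simp add: measure_def E_def)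
  finally show ?thesis .
qed

lemma Q_grid:
  assumes "m \<le> 2^n"
  shows "Q (real m / 2^n) = real m / 2^n"
  unfolding Q_def measure_E_grid[OF assms] using Kpos by (simp add: field_simps)

lemma Q0: "Q 0 = 0" using Q_grid[of 0] by simp

lemma Q1: "Q 1 = 1" using Q_grid[of "2^n"] by simp

lemma Q_diff:
  assumes y: "0 \<le> y" "y \<le> y'" "y' \<le> 1"
  shows "(y' - y) / 2 \<le> Q y' - Q y" "Q y' - Q y \<le> (1 + real K) / 2 * (y' - y)"
proof -
  let ?A = "E \<inter> {0..y}" and ?B = "E \<inter> {y<..y'}"
  have As: "?A \<in> sets nu01" and Bs: "?B \<in> sets nu01" using y by (auto simp: sets_nu01_iff)
  have "E \<inter> {0..y'} = ?A \<union> ?B" using y by auto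
  moreover have "?A \<inter> ?B = {}" by auto
  ultimately have add: "measure nu01 (E \<inter> {0..y'}) = measure nu01 ?A + measure nu01 ?B"
    using nu.finite_measure_Union[OF As Bs] by simp
  have B0: "0 \<le> measure nu01 ?B" by simp
  have "measure nu01 ?B \<le> measure nu01 {y..y'}"
    by (rule nu.finite_measure_mono) (use y in \<open>auto simp: sets_nu01_iff\<close>)
  also have "\<dots> = y' - y" using y by (simp add: measure_nu01)
  finally have B1: "measure nu01 ?B \<le> y' - y" .
  have eq: "Q y' - Q y = (y' - y) / 2 + real K / 2 * measure nu01 ?B"
    unfolding Q_def add by (simp add: field_simps)
  show "(y' - y) / 2 \<le> Q y' - Q y" unfolding eq using B0 by simp
  have "real K / 2 * measure nu01 ?B \<le> real K / 2 * (y' - y)" using B1 by (intro mult_left_mono) auto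
  then show "Q y' - Q y \<le> (1 + real K) / 2 * (y' - y)" unfolding eq by (simp add: field_simps)
qed

lemma Q_less: assumes "0 \<le> y" "y < y'" "y' \<le> 1" shows "Q y < Q y'"
proof -
  have "(y' - y) / 2 \<le> Q y' - Q y" using Q_diff(1)[of y y'] assms by simp
  moreover have "0 < (y' - y) / 2" using assms by simp
  ultimately show ?thesis by linarith
qed

lemma Q_le_iff: "a \<in> {0..1} \<Longrightarrow> b \<in> {0..1} \<Longrightarrow> Q a \<le> Q b \<longleftrightarrow> a \<le> b"
  using Q_less[of a b] Q_less[of b a] by (cases "a = b") (auto simp: not_le[symmetric])

lemma Q_cont: "continuous_on {0..1} Q"
proof (rule lipschitz_on_continuous_on)
  show "((1 + real K) / 2)-lipschitz_on {0..1} Q"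
  proof (rule lipschitz_onI)
    fix x y :: real assume x: "x \<in> {0..1}" and y: "y \<in> {0..1}"
    show "dist (Q x) (Q y) \<le> (1 + real K) / 2 * dist x y"
    proof (cases "x \<le> y")
      case True
      then show ?thesis using Q_diff[of x y] x y by (simp add: dist_real_def abs_if)
    next
      case False
      then show ?thesis using Q_diff[of y x] x y by (simp add: dist_real_def abs_if)
    qed
  qed simp
qed

lemma Q_image: "Q ` {0..1} = {0..1}"
proof
  show "Q ` {0..1} \<subseteq> {0..1}"
  proof
    fix z assume "z \<in> Q ` {0..1}"
    then obtain y where y: "y \<in> {0..1}" "z = Q y" by auto
    have "Q 0 \<le> Q y" "Q y \<le> Q 1" using y Q_le_iff[of 0 y] Q_le_iff[of y 1] by auto
    then show "z \<in> {0..1}" using y Q0 Q1 by simp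
  qed
  show "{0..1} \<subseteq> Q ` {0..1}"
  proof
    fix z :: real assume z: "z \<in> {0..1}"
    have "\<exists>y\<ge>0. y \<le> 1 \<and> Q y = z"
      by (rule IVT') (use z Q0 Q1 Q_cont in auto)
    then show "z \<in> Q ` {0..1}" by force
  qed
qed

lemma Q_inj: "inj_on Q {0..1}"
proof (rule inj_onI)
  fix a b assume a: "a \<in> {0..1::real}" and b: "b \<in> {0..1::real}" and e: "Q a = Q b"
  have "a \<le> b" using Q_le_iff[OF a b] e by simp
  moreover have "b \<le> a" using Q_le_iff[OF b a] e by simp
  ultimately show "a = b" by simp
qed

lemma Q_bij: "bij_betw Q {0..1} {0..1}"
  unfolding bij_betw_def using Q_inj Q_image by simp

definition T :: "real \<Rightarrow> real" where
  "T x = (if x \<in> {0..1} then inv_into {0..1} Q x else x)"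

lemma T_in: "x \<in> {0..1} \<Longrightarrow> T x \<in> {0..1}"
  using inv_into_into[of x Q "{0..1}"] Q_image by (simp add: T_def)

lemma Q_T: "x \<in> {0..1} \<Longrightarrow> Q (T x) = x"
  unfolding T_def using Q_image by (auto intro: f_inv_into_f)

lemma T_Q: "y \<in> {0..1} \<Longrightarrow> T (Q y) = y"
proof -
  assume y: "y \<in> {0..1}"
  then have "Q y \<in> {0..1}" using Q_image by auto
  then show ?thesis unfolding T_def using y Q_inj by (simp add: inv_into_f_f)
qed

lemma T_le_iff: "x \<in> {0..1} \<Longrightarrow> y \<in> {0..1} \<Longrightarrow> T x \<le> y \<longleftrightarrow> x \<le> Q y"
  using Q_le_iff[of "T x" y] T_in Q_T by simp

lemma T_ge_iff: "x \<in> {0..1} \<Longrightarrow> y \<in> {0..1} \<Longrightarrow> y \<le> T x \<longleftrightarrow> Q y \<le> x"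
  using Q_le_iff[of y "T x"] T_in Q_T by simp

lemma T_bij: "bij_betw T {0..1} {0..1}"
proof -
  have "bij_betw (inv_into {0..1} Q) {0..1} {0..1}" using Q_bij bij_betw_inv_into by blast
  then show ?thesis by (rule bij_betw_cong[THEN iffD1, rotated]) (simp add: T_def)
qed

lemma T_mono: "mono_on {0..1} T"
  unfolding mono_on_def using T_le_iff T_in Q_T by metis

lemma inv_T: "y \<in> {0..1} \<Longrightarrow> inv_into {0..1} T y = Q y"
proof -
  assume y: "y \<in> {0..1}"
  have "Q y \<in> {0..1}" using y Q_image by auto
  moreover have "T (Q y) = y" by (rule T_Q[OF y])
  ultimately show ?thesis using bij_betw_imp_inj_on[OF T_bij] by (intro inv_into_f_eq) auto
qed

lemma Q_mono: "mono_on {0..1} Q"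
  unfolding mono_on_def using Q_le_iff by blast

lemma T_meas: "T \<in> nu01 \<rightarrow>\<^sub>M nu01"
  by (rule mono_on_measurable_nu01[OF T_mono T_in])

lemma invT_meas: "inv_into (space nu01) T \<in> nu01 \<rightarrow>\<^sub>M nu01"
proof -
  have "Q \<in> nu01 \<rightarrow>\<^sub>M nu01" by (rule mono_on_measurable_nu01[OF Q_mono]) (use Q_image in auto)
  then show ?thesis by (subst measurable_cong[where g=Q]) (auto simp: inv_T)
qed

end

context TS
begin

lemma cell_T:
  assumes x: "x \<in> {0..<1}"
  shows "T x \<in> {0..<1}" "cell n (T x) = cell n x"
proof -
  define c where "c = cell n x"
  have c0: "0 \<le> c" using x unfolding c_def cell_def by simp
  have c1: "c < 2^n"
  proof -
    have "2^n * x < 2^n" using x by simp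
    then have "\<lfloor>2^n * x\<rfloor> < (2::int)^n" by (simp add: floor_less_iff)
    then show ?thesis unfolding c_def cell_def .
  qed
  define m where "m = nat c"
  have cm: "real_of_int c = real m" using c0 by (simp add: m_def)
  have m1: "m + 1 \<le> 2^n" using c1 c0 unfolding m_def by (simp add: nat_less_iff[symmetric]) (metis Suc_leI nat_less_iff of_nat_numeral of_nat_power zless_nat_eq_int_zless)
  have m1': "m \<le> 2^n" using m1 by simp
  have m1r: "real m + 1 \<le> 2^n" using m1 by (metis of_nat_1 of_nat_add of_nat_le_iff of_nat_numeral of_nat_power)
  have bx: "real m / 2^n \<le> x" "x < real (m + 1) / 2^n"
    using cell_bounds[where n=n and x=x] unfolding c_def[symmetric] cm by (simp_all add: add_divide_distrib)
  have lo: "real m / 2^n \<in> {0..1}" using m1r m1' by (auto simp: field_simps)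
  have hi: "real (m+1) / 2^n \<in> {0..1}" using m1r m1 by (auto simp: field_simps)
  have x1: "x \<in> {0..1}" using x by auto
  have tlo: "real m / 2^n \<le> T x" using T_ge_iff[OF x1 lo] Q_grid[OF m1'] bx by simp
  moreover have thi: "T x < real (m + 1) / 2^n" using T_ge_iff[OF x1 hi] Q_grid[of "m+1"] m1 bx by simp
  ultimately have b: "real_of_int c / 2^n \<le> T x" "T x < (real_of_int c + 1) / 2^n"
    using cm by (simp_all add: add_divide_distrib)
  show "cell n (T x) = cell n x" unfolding c_def[symmetric] by (rule cell_range[OF b])
  have l1: "0 \<le> real m / 2^n" and l2: "real (m+1) / 2^n \<le> 1" using lo hi by auto
  show "T x \<in> {0..<1}" using l1 l2 tlo thi unfolding atLeastLessThan_iff by linarith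
qed

lemma T_one: "T 1 = 1" using T_Q[of 1] Q1 by simp

lemma Q_half: "Q (1/2) = 1/2"
proof -
  have "(2::real)^n = 2 * 2^(n-1)" using n1 by (cases n) auto
  then have "real (2^(n-1)) / 2^n = (1/2::real)" by simp
  moreover have "(2::nat)^(n-1) \<le> 2^n" by (simp add: power_increasing)
  ultimately show ?thesis using Q_grid[of "2^(n-1)"] by simp
qed

lemma T_half: "x \<in> {0..1} \<Longrightarrow> T x \<le> 1/2 \<longleftrightarrow> x \<le> 1/2"
  using T_le_iff[of x "1/2"] Q_half by simp

lemma ennreal_lin:
  assumes "0 \<le> a" "0 \<le> b" "0 \<le> c" "0 \<le> d"
  shows "ennreal a * ennreal b + ennreal c * ennreal d = ennreal (a * b + c * d)"
proof -
  have "ennreal (a * b + c * d) = ennreal (a * b) + ennreal (c * d)"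
    by (rule ennreal_plus) (use assms in auto)
  also have "\<dots> = ennreal a * ennreal b + ennreal c * ennreal d"
    using assms by (simp only: ennreal_mult)
  finally show ?thesis by simp
qed

definition g :: "real \<Rightarrow> ennreal" where
  "g y = ennreal (indicator {0..1} y * (1/2 + real K / 2 * indicator E y))"

lemma g_meas[measurable]: "g \<in> borel_measurable borel"
  unfolding g_def by measurable

lemma emeasure_lborel_nu: "X \<in> sets borel \<Longrightarrow> X \<subseteq> {0..1} \<Longrightarrow> emeasure lborel X = ennreal (measure nu01 X)"
  by (simp add: emeasure_nu01[symmetric] nu.emeasure_eq_measure)

lemma emeasure_M2:
  assumes B: "B \<in> sets borel"
  shows "emeasure (density lborel g) B =
    ennreal (1/2 * measure nu01 (B \<inter> {0..1}) + real K / 2 * measure nu01 (B \<inter> {0..1} \<inter> E))"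
proof -
  have "emeasure (density lborel g) B = (\<integral>\<^sup>+ x. g x * indicator B x \<partial>lborel)"
    by (rule emeasure_density) (use B in auto)
  also have "\<dots> = (\<integral>\<^sup>+ x. ennreal (1/2) * indicator (B \<inter> {0..1}) x + ennreal (real K / 2) * indicator (B \<inter> {0..1} \<inter> E) x \<partial>lborel)"
  proof (rule nn_integral_cong)
    fix x
    have s: "ennreal (1/2 + real K / 2) = ennreal (1/2) + ennreal (real K / 2)" by (rule ennreal_plus) auto
    show "g x * indicator B x = ennreal (1/2) * indicator (B \<inter> {0..1}) x + ennreal (real K / 2) * indicator (B \<inter> {0..1} \<inter> E) x"
      by (cases "x \<in> B"; cases "x \<in> {0..1}"; cases "x \<in> E") (simp_all only: g_def indicator_simps s mult_1_right mult_0_right mult_1 mult_0 add_0_right add_0 IntI Int_iff simp_thms ennreal_0, auto)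
  qed
  also have "\<dots> = ennreal (1/2) * emeasure lborel (B \<inter> {0..1}) + ennreal (real K / 2) * emeasure lborel (B \<inter> {0..1} \<inter> E)"
    using B by (subst nn_integral_add) (auto simp: nn_integral_cmult_indicator)
  also have "\<dots> = ennreal (1/2) * ennreal (measure nu01 (B \<inter> {0..1})) + ennreal (real K / 2) * ennreal (measure nu01 (B \<inter> {0..1} \<inter> E))"
    using B by (simp only: emeasure_lborel_nu[of "B \<inter> {0..1}"] emeasure_lborel_nu[of "B \<inter> {0..1} \<inter> E"] sets.Int E_borel borel_closed closed_atLeastAtMost Int_lower2 le_infI1)
  also have "\<dots> = ennreal (1/2 * measure nu01 (B \<inter> {0..1}) + real K / 2 * measure nu01 (B \<inter> {0..1} \<inter> E))"
    by (rule ennreal_lin) auto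
  finally show ?thesis .
qed

lemma T_borel: "T \<in> borel_measurable nu01"
proof -
  have "T \<in> restrict_space borel {0..1} \<rightarrow>\<^sub>M borel" by (rule borel_measurable_mono_on_fnc[OF T_mono])
  moreover have eq: "(nu01 \<rightarrow>\<^sub>M borel) = (restrict_space borel {0..1} \<rightarrow>\<^sub>M borel)"
    by (rule measurable_cong_sets[OF sets_nu01 refl])
  ultimately show ?thesis by (simp only: eq)
qed

lemma pre_T_le: "y \<in> {0..1} \<Longrightarrow> T -` {..y} \<inter> {0..1} = {0..Q y}"
proof -
  assume y: "y \<in> {0..1}"
  have Qy: "Q y \<in> {0..1}" using Q_image y by auto
  show ?thesis
  proof (intro set_eqI iffI)
    fix x assume "x \<in> T -` {..y} \<inter> {0..1}"
    then show "x \<in> {0..Q y}" using T_le_iff[OF _ y, of x] by auto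
  next
    fix x assume x: "x \<in> {0..Q y}"
    then have "x \<in> {0..1}" using Qy by auto
    then show "x \<in> T -` {..y} \<inter> {0..1}" using T_le_iff[OF _ y, of x] x by auto
  qed
qed

lemma measure_M1: "measure (distr nu01 borel T) {..y} = (if y < 0 then 0 else if y \<le> 1 then Q y else 1)"
proof -
  have "measure (distr nu01 borel T) {..y} = measure nu01 (T -` {..y} \<inter> {0..1})"
    by (simp add: measure_distr[OF T_borel])
  also have "\<dots> = (if y < 0 then 0 else if y \<le> 1 then Q y else 1)"
  proof (cases "y < 0")
    case True
    then have "T -` {..y} \<inter> {0..1} = {}" using T_in by force
    then show ?thesis using True by simp
  next
    case False
    show ?thesis
    proof (cases "y \<le> 1")
      case True
      then have y: "y \<in> {0..1}" using False by auto
      have "Q y \<in> {0..1}" using Q_image y by auto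
      then show ?thesis using False True pre_T_le[OF y] by (simp add: measure_nu01)
    next
      case False2: False
      then have "T -` {..y} \<inter> {0..1} = {0..1}" using T_in by force
      then show ?thesis using False False2 by (simp add: measure_nu01)
    qed
  qed
  finally show ?thesis .
qed

lemma measure_M2: "measure (density lborel g) {..y} = (if y < 0 then 0 else if y \<le> 1 then Q y else 1)"
proof -
  have "measure (density lborel g) {..y} = 1/2 * measure nu01 ({..y} \<inter> {0..1}) + real K / 2 * measure nu01 ({..y} \<inter> {0..1} \<inter> E)"
    by (rule measure_eq_emeasure_eq_ennreal) (auto simp: emeasure_M2 simp del: ennreal_plus)
  also have "\<dots> = (if y < 0 then 0 else if y \<le> 1 then Q y else 1)"
  proof (cases "y < 0")
    case True
    then have "{..y} \<inter> {0..1} = {}" by auto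
    then show ?thesis using True by simp
  next
    case False
    show ?thesis
    proof (cases "y \<le> 1")
      case True
      have e1: "{..y} \<inter> {0..1} = {0..y}" using True by auto
      have e2: "{0..y} \<inter> E = E \<inter> {0..y}" by auto
      show ?thesis using False True unfolding e1 e2 Q_def by (simp add: measure_nu01)
    next
      case False2: False
      have e1: "{..y} \<inter> {0..1} = {0..1}" using False2 by auto
      have e2: "{0..1} \<inter> E = E \<inter> {0..1}" by auto
      show ?thesis using False False2 Q1 unfolding e1 e2 Q_def by (simp add: measure_nu01)
    qed
  qed
  finally show ?thesis .
qed

lemma M1_eq_M2: "distr nu01 borel T = density lborel g"
proof (rule cdf_unique')
  show "finite_borel_measure (distr nu01 borel T)"
  proof (intro finite_borel_measure.intro finite_borel_measure_axioms.intro)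
    show "finite_measure (distr nu01 borel T)" by (rule nu.finite_measure_distr[OF T_borel])
  qed simp
  show "finite_borel_measure (density lborel g)"
  proof (intro finite_borel_measure.intro finite_borel_measure_axioms.intro)
    show "finite_measure (density lborel g)"
      by (intro finite_measureI) (simp add: emeasure_M2)
  qed simp
  show "cdf (distr nu01 borel T) = cdf (density lborel g)"
    unfolding cdf_def measure_M1 measure_M2 ..
qed

lemma measure_T_pre:
  assumes B: "B \<in> sets nu01"
  shows "emeasure nu01 (T -` B \<inter> {0..1}) = ennreal (measure nu01 B / 2 + real K / 2 * measure nu01 (B \<inter> E))"
    "measure nu01 (T -` B \<inter> {0..1}) = measure nu01 B / 2 + real K / 2 * measure nu01 (B \<inter> E)"
proof -
  have Bb: "B \<in> sets borel" "B \<subseteq> {0..1}" using B by (auto simp: sets_nu01_iff)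
  have e1: "B \<inter> {0..1} = B" and e2: "B \<inter> {0..1} \<inter> E = B \<inter> E" using Bb by auto
  have "emeasure nu01 (T -` B \<inter> {0..1}) = emeasure (distr nu01 borel T) B"
    using Bb by (simp add: emeasure_distr[OF T_borel])
  also have "\<dots> = emeasure (density lborel g) B" by (simp add: M1_eq_M2)
  also have "\<dots> = ennreal (measure nu01 B / 2 + real K / 2 * measure nu01 (B \<inter> E))"
    unfolding emeasure_M2[OF Bb(1)] e1 e2 by simp
  finally show 1: "emeasure nu01 (T -` B \<inter> {0..1}) = ennreal (measure nu01 B / 2 + real K / 2 * measure nu01 (B \<inter> E))" .
  then show "measure nu01 (T -` B \<inter> {0..1}) = measure nu01 B / 2 + real K / 2 * measure nu01 (B \<inter> E)"
    by (intro measure_eq_emeasure_eq_ennreal) auto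
qed

lemma T_nonsing: "T \<in> nonsing_aut nu01"
  unfolding nonsing_aut_def
proof (intro CollectI conjI ballI)
  show "bij_betw T (space nu01) (space nu01)" using T_bij by simp
  show "T \<in> nu01 \<rightarrow>\<^sub>M nu01" by (rule T_meas)
  show "inv_into (space nu01) T \<in> nu01 \<rightarrow>\<^sub>M nu01" by (rule invT_meas)
  fix A assume A: "A \<in> sets nu01"
  define X where "X = measure nu01 A / 2 + real K / 2 * measure nu01 (A \<inter> E)"
  have "emeasure (distr nu01 nu01 T) A = emeasure nu01 (T -` A \<inter> {0..1})"
    using A by (simp add: emeasure_distr[OF T_meas])
  also have "\<dots> = ennreal X" unfolding X_def by (rule measure_T_pre(1)[OF A])
  finally have eq: "emeasure (distr nu01 nu01 T) A = ennreal X" .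
  have mAE: "measure nu01 (A \<inter> E) \<le> measure nu01 A" by (rule nu.finite_measure_mono[OF _ A]) auto
  have p1: "0 \<le> measure nu01 A" and p2: "0 \<le> measure nu01 (A \<inter> E)" by simp_all
  have p3: "0 \<le> real K / 2 * measure nu01 (A \<inter> E)" using p2 by simp
  have "X \<le> 0 \<longleftrightarrow> measure nu01 A \<le> 0"
  proof
    assume "X \<le> 0" then show "measure nu01 A \<le> 0" using p3 unfolding X_def by linarith
  next
    assume a: "measure nu01 A \<le> 0"
    then have "measure nu01 (A \<inter> E) = 0" using mAE p2 by linarith
    then show "X \<le> 0" using a unfolding X_def by simp
  qed
  then show "(emeasure (distr nu01 nu01 T) A = 0) = (emeasure nu01 A = 0)"
    unfolding eq nu.emeasure_eq_measure ennreal_eq_0_iff .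
qed

end

lemma borel_measurable_nu01:
  assumes m: "f \<in> borel \<rightarrow>\<^sub>M borel" and r: "\<And>x. x \<in> {0..1} \<Longrightarrow> f x \<in> {0..1::real}"
  shows "f \<in> nu01 \<rightarrow>\<^sub>M nu01"
proof -
  have "f \<in> restrict_space borel {0..1} \<rightarrow>\<^sub>M borel" by (rule measurable_restrict_space1[OF m])
  then have "f \<in> restrict_space borel {0..1} \<rightarrow>\<^sub>M restrict_space borel {0..1}"
    using measurable_restrict_space2[of f "restrict_space borel {0..1}" "{0..1}" borel] r
    by (auto simp: space_restrict_space)
  then show ?thesis using measurable_cong_sets[OF sets_nu01 sets_nu01] by simp
qed

lemma emeasure_lborel_shift: "B \<in> sets borel \<Longrightarrow> emeasure lborel ((+) c -` B) = emeasure lborel (B :: real set)"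
proof -
  assume B: "B \<in> sets borel"
  have "emeasure lborel B = emeasure (distr lborel borel ((+) c)) B" by (simp add: lborel_distr_plus)
  also have "\<dots> = emeasure lborel ((+) c -` B)" using B by (simp add: emeasure_distr)
  finally show ?thesis by simp
qed

context TS
begin

definition S :: "real \<Rightarrow> real" where
  "S x = (if x \<in> E \<and> 0 \<le> x \<and> x < 1/2 then x + 1/2 else if x \<in> E \<and> 1/2 \<le> x \<and> x < 1 then x - 1/2 else x)"

lemma E_shift: "y + 1/2 \<in> E \<longleftrightarrow> y \<in> E"
proof -
  have p: "(2::real)^n * (1/2) = real_of_int (2^(n-1))" using n1 by (cases n) auto
  have q: "2^n * (y + 1/2) = 2^n * y + real_of_int (2^(n-1))" using p by (simp add: distrib_left)
  have c: "cell n (y + 1/2) = cell n y + 2^(n-1)"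
    unfolding cell_def q by (metis floor_add_int)
  have "2^n * (y + 1/2) - real_of_int (cell n (y + 1/2)) = 2^n * y - real_of_int (cell n y)"
    unfolding c using p by (simp add: distrib_left)
  then show ?thesis by (simp add: E_def Eset_def)
qed

lemma S_in: "x \<in> {0..1} \<Longrightarrow> S x \<in> {0..1}"
  unfolding S_def by auto

lemma S_S: "x \<in> {0..1} \<Longrightarrow> S (S x) = x"
proof -
  assume x: "x \<in> {0..1}"
  show ?thesis
  proof (cases "x \<in> E \<and> 0 \<le> x \<and> x < 1/2")
    case True
    then have "x + 1/2 \<in> E" using E_shift by simp
    then show ?thesis using True unfolding S_def by auto
  next
    case False
    show ?thesis
    proof (cases "x \<in> E \<and> 1/2 \<le> x \<and> x < 1")
      case True
      then have "x - 1/2 \<in> E" using E_shift[of "x - 1/2"] by simp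
      then show ?thesis using True False unfolding S_def by auto
    next
      case False2: False
      then show ?thesis using False unfolding S_def by auto
    qed
  qed
qed

lemma S_bij: "bij_betw S {0..1} {0..1}"
  by (rule bij_betw_byWitness[where f'=S]) (use S_S S_in in blast)+

lemma inv_S: "y \<in> {0..1} \<Longrightarrow> inv_into {0..1} S y = S y"
  using bij_betw_imp_inj_on[OF S_bij] S_in S_S by (intro inv_into_f_eq) auto

lemma S_borel: "S \<in> borel \<rightarrow>\<^sub>M borel"
  unfolding S_def by measurable

lemma S_meas: "S \<in> nu01 \<rightarrow>\<^sub>M nu01"
  by (rule borel_measurable_nu01[OF S_borel S_in])

lemma invS_meas: "inv_into (space nu01) S \<in> nu01 \<rightarrow>\<^sub>M nu01"
  using S_meas by (subst measurable_cong[where g=S]) (auto simp: inv_S)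

lemma S_null:
  assumes B: "B \<in> sets nu01" and B0: "emeasure nu01 B = 0"
  shows "emeasure nu01 (S -` B \<inter> {0..1}) = 0"
proof -
  have Bb: "B \<in> sets borel" "B \<subseteq> {0..1}" using B by (auto simp: sets_nu01_iff)
  have L0: "emeasure lborel B = 0" using B0 Bb by (simp add: emeasure_nu01)
  have sub: "S -` B \<inter> {0..1} \<subseteq> B \<union> ((+) (1/2) -` B) \<union> ((+) (-1/2) -` B)"
  proof
    fix x assume x: "x \<in> S -` B \<inter> {0..1}"
    show "x \<in> B \<union> ((+) (1/2) -` B) \<union> ((+) (-1/2) -` B)"
    proof (cases "x \<in> E \<and> 0 \<le> x \<and> x < 1/2")
      case True then show ?thesis using x by (auto simp: S_def add.commute)
    next
      case False
      then show ?thesis using x by (cases "x \<in> E \<and> 1/2 \<le> x \<and> x < 1") (auto simp: S_def)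
    qed
  qed
  have m: "S -` B \<inter> {0..1} \<in> sets borel" using S_borel Bb by measurable
  have sh: "(+) c -` B \<in> sets borel" for c :: real
  proof -
    have "(+) c \<in> borel \<rightarrow>\<^sub>M (borel :: real measure)" by simp
    then have "(+) c -` B \<inter> space borel \<in> sets borel" using Bb(1) by (rule measurable_sets)
    then show ?thesis by simp
  qed
  have "emeasure nu01 (S -` B \<inter> {0..1}) = emeasure lborel (S -` B \<inter> {0..1})"
    by (simp add: emeasure_nu01)
  also have "\<dots> \<le> emeasure lborel (B \<union> ((+) (1/2) -` B) \<union> ((+) (-1/2) -` B))"
    by (rule emeasure_mono[OF sub]) (use Bb sh m in auto)
  also have "\<dots> \<le> emeasure lborel (B \<union> ((+) (1/2) -` B)) + emeasure lborel ((+) (-1/2) -` B)"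
    by (rule emeasure_subadditive) (use Bb sh m in auto)
  also have "\<dots> \<le> emeasure lborel B + emeasure lborel ((+) (1/2) -` B) + emeasure lborel ((+) (-1/2) -` B)"
    by (intro add_mono emeasure_subadditive) (use Bb sh m in auto)
  also have "\<dots> = 0" using L0 Bb by (simp add: emeasure_lborel_shift)
  finally show ?thesis by simp
qed

lemma S_nonsing: "S \<in> nonsing_aut nu01"
  unfolding nonsing_aut_def
proof (intro CollectI conjI ballI)
  show "bij_betw S (space nu01) (space nu01)" using S_bij by simp
  show "S \<in> nu01 \<rightarrow>\<^sub>M nu01" by (rule S_meas)
  show "inv_into (space nu01) S \<in> nu01 \<rightarrow>\<^sub>M nu01" by (rule invS_meas)
  fix A assume A: "A \<in> sets nu01"
  have ed: "emeasure (distr nu01 nu01 S) A = emeasure nu01 (S -` A \<inter> {0..1})"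
    using A by (simp add: emeasure_distr[OF S_meas])
  have A': "S -` A \<inter> {0..1} \<in> sets nu01" using A S_meas by (auto simp: measurable_def)
  have AA: "S -` (S -` A \<inter> {0..1}) \<inter> {0..1} = A"
  proof (intro set_eqI iffI)
    fix x assume "x \<in> S -` (S -` A \<inter> {0..1}) \<inter> {0..1}"
    then show "x \<in> A" using S_S by auto
  next
    fix x assume xA: "x \<in> A"
    then have x: "x \<in> {0..1}" using A by (auto simp: sets_nu01_iff)
    then show "x \<in> S -` (S -` A \<inter> {0..1}) \<inter> {0..1}" using S_S[OF x] S_in[OF x] xA by auto
  qed
  show "(emeasure (distr nu01 nu01 S) A = 0) = (emeasure nu01 A = 0)"
  proof
    assume "emeasure (distr nu01 nu01 S) A = 0"
    then have "emeasure nu01 (S -` (S -` A \<inter> {0..1}) \<inter> {0..1}) = 0"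
      using S_null[OF A'] ed by simp
    then show "emeasure nu01 A = 0" unfolding AA .
  next
    assume "emeasure nu01 A = 0"
    then show "emeasure (distr nu01 nu01 S) A = 0" unfolding ed by (rule S_null[OF A])
  qed
qed

lemma moved_S: "moved S BB \<subseteq> E \<inter> {0..1}"
  unfolding moved_def S_def by auto

lemma measure_E: "measure nu01 (E \<inter> {0..1}) = 1 / real K"
  using measure_E_grid[of "2^n"] by simp

lemma D_sets: "B \<in> sets nu01 \<Longrightarrow> cellinv n G \<Longrightarrow> symd B G \<inter> {0..1} \<in> sets nu01"
  unfolding cellinv_def by (auto simp: sets_nu01_iff symd_def)

lemma measure_T_pre_le:
  assumes D: "D \<in> sets nu01"
  shows "measure nu01 (T -` D \<inter> {0..1}) \<le> (real K + 1) / 2 * measure nu01 D"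
proof -
  have "measure nu01 (D \<inter> E) \<le> measure nu01 D" by (rule nu.finite_measure_mono[OF _ D]) auto
  then have "real K / 2 * measure nu01 (D \<inter> E) \<le> real K / 2 * measure nu01 D" by (intro mult_left_mono) auto
  then show ?thesis unfolding measure_T_pre(2)[OF D] by (simp add: field_simps)
qed

lemma moved_T_bound:
  assumes BB: "finite BB" "BB \<subseteq> sets nu01" and G: "\<And>B. B \<in> BB \<Longrightarrow> cellinv n (G B)"
  shows "measure nu01 (moved T BB) \<le> (\<Sum>B\<in>BB. (real K + 3) / 2 * measure nu01 (symd B (G B) \<inter> {0..1}))"
proof -
  define D where "D B = symd B (G B) \<inter> {0..1}" for B
  have Ds: "D B \<in> sets nu01" if "B \<in> BB" for B unfolding D_def using that BB G by (intro D_sets) auto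
  have TDs: "T -` D B \<inter> {0..1} \<in> sets nu01" if "B \<in> BB" for B
    using Ds[OF that] T_meas by (auto simp: measurable_def)
  have sub: "moved T BB \<subseteq> (\<Union>B\<in>BB. (T -` D B \<inter> {0..1}) \<union> D B)"
  proof
    fix x assume "x \<in> moved T BB"
    then obtain B where B: "B \<in> BB" and x: "x \<in> {0..1}" and ne: "(T x \<in> B) \<noteq> (x \<in> B)"
      unfolding moved_def by blast
    have "x \<noteq> 1" using ne T_one by auto
    then have x1: "x \<in> {0..<1}" using x by auto
    have Gi: "G B \<subseteq> {0..<1}" and inv: "\<forall>a\<in>{0..<1}. \<forall>b\<in>{0..<1}. cell n a = cell n b \<longrightarrow> (a \<in> G B \<longleftrightarrow> b \<in> G B)"
      using G[OF B] unfolding cellinv_def by blast+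
    have "T x \<in> G B \<longleftrightarrow> x \<in> G B" using inv cell_T[OF x1] x1 by blast
    moreover have Tx: "T x \<in> {0..1}" using T_in x by blast
    ultimately have "x \<in> D B \<or> T x \<in> D B" using ne x unfolding D_def symd_def by blast
    then show "x \<in> (\<Union>B\<in>BB. (T -` D B \<inter> {0..1}) \<union> D B)" using B x by blast
  qed
  have "measure nu01 (moved T BB) \<le> measure nu01 (\<Union>B\<in>BB. (T -` D B \<inter> {0..1}) \<union> D B)"
    by (rule nu.finite_measure_mono[OF sub]) (use BB Ds TDs in auto)
  also have "\<dots> \<le> (\<Sum>B\<in>BB. measure nu01 ((T -` D B \<inter> {0..1}) \<union> D B))"
    by (rule measure_UNION_le) (use BB Ds TDs in auto)
  also have "\<dots> \<le> (\<Sum>B\<in>BB. (real K + 3) / 2 * measure nu01 (D B))"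
  proof (rule sum_mono)
    fix B assume B: "B \<in> BB"
    have "measure nu01 ((T -` D B \<inter> {0..1}) \<union> D B) \<le> measure nu01 (T -` D B \<inter> {0..1}) + measure nu01 (D B)"
      by (rule measure_Un_le) (use Ds[OF B] TDs[OF B] in auto)
    also have "\<dots> \<le> (real K + 1) / 2 * measure nu01 (D B) + measure nu01 (D B)"
      using measure_T_pre_le[OF Ds[OF B]] by simp
    also have "\<dots> = (real K + 3) / 2 * measure nu01 (D B)" by (simp add: field_simps)
    finally show "measure nu01 ((T -` D B \<inter> {0..1}) \<union> D B) \<le> (real K + 3) / 2 * measure nu01 (D B)" .
  qed
  finally show ?thesis unfolding D_def .
qed

lemma moved_S_bound: "measure nu01 (moved S BB) \<le> 1 / real K"
proof -
  have "measure nu01 (moved S BB) \<le> measure nu01 (E \<inter> {0..1})"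
    by (rule nu.finite_measure_mono[OF moved_S]) (auto simp: sets_nu01_iff)
  then show ?thesis using measure_E by simp
qed

lemma ST_small: "measure nu01 {x\<in>{0..1/2}. S (T x) \<in> {0..1/2}} \<le> 1/4"
proof -
  define A :: "real set" where "A = {0..1/2}"
  define D0 where "D0 = (A - E) \<union> {0, 1/2}"
  have D0s: "D0 \<in> sets nu01" unfolding D0_def A_def by (auto simp: sets_nu01_iff)
  have sub: "{x\<in>{0..1/2}. S (T x) \<in> {0..1/2}} \<subseteq> T -` D0 \<inter> {0..1}"
  proof
    fix x assume x: "x \<in> {x\<in>{0..1/2}. S (T x) \<in> {0..1/2}}"
    then have x1: "x \<in> {0..1}" by auto
    define y where "y = T x"
    have y1: "y \<in> {0..1}" unfolding y_def using T_in[OF x1] .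
    have yh: "y \<le> 1/2" unfolding y_def using T_half[OF x1] x by auto
    have Sy: "S y \<in> {0..1/2}" using x unfolding y_def by auto
    have "y \<in> D0"
    proof (cases "y \<in> E \<and> 0 \<le> y \<and> y < 1/2")
      case True
      then have "S y = y + 1/2" by (simp add: S_def)
      then have "y = 0" using Sy True by auto
      then show ?thesis by (simp add: D0_def)
    next
      case False
      show ?thesis
      proof (cases "y \<in> E")
        case True
        then have "y = 1/2" using False y1 yh by auto
        then show ?thesis by (simp add: D0_def)
      next
        case False2: False
        then show ?thesis using y1 yh by (auto simp: D0_def A_def)
      qed
    qed
    then show "x \<in> T -` D0 \<inter> {0..1}" using x1 unfolding y_def by auto
  qed
  have "measure nu01 {x\<in>{0..1/2}. S (T x) \<in> {0..1/2}} \<le> measure nu01 (T -` D0 \<inter> {0..1})"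
    by (rule nu.finite_measure_mono[OF sub]) (use D0s T_meas in \<open>auto simp: measurable_def\<close>)
  also have "\<dots> = measure nu01 D0 / 2 + real K / 2 * measure nu01 (D0 \<inter> E)"
    by (rule measure_T_pre(2)[OF D0s])
  also have "\<dots> \<le> 1/4"
  proof -
    have p: "{0, 1/2::real} \<in> sets nu01" by (auto simp: sets_nu01_iff)
    have m2: "measure nu01 {0, 1/2::real} = 0"
    proof -
      have "emeasure lborel {0, 1/2::real} = 0" by (rule emeasure_lborel_countable) simp
      moreover have "{0, 1/2::real} \<subseteq> {0..1}" by auto
      ultimately show ?thesis by (simp add: emeasure_nu01 measure_def)
    qed
    have "measure nu01 D0 \<le> measure nu01 A + measure nu01 {0, 1/2::real}"
    proof -
      have "measure nu01 D0 \<le> measure nu01 (A \<union> {0, 1/2})"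
        by (rule nu.finite_measure_mono) (auto simp: D0_def A_def sets_nu01_iff)
      also have "\<dots> \<le> measure nu01 A + measure nu01 {0, 1/2::real}"
        by (rule measure_Un_le) (auto simp: A_def sets_nu01_iff)
      finally show ?thesis .
    qed
    moreover have "measure nu01 A = 1/2" by (simp add: A_def measure_nu01)
    ultimately have d1: "measure nu01 D0 \<le> 1/2" using m2 by simp
    have "measure nu01 (D0 \<inter> E) \<le> measure nu01 {0, 1/2::real}"
      by (rule nu.finite_measure_mono[OF _ p]) (auto simp: D0_def)
    then have d2: "measure nu01 (D0 \<inter> E) = 0" using m2 by (simp add: measure_nonneg antisym)
    show ?thesis using d1 d2 by simp
  qed
  finally show ?thesis .
qed

end

definition Phi :: "(real \<Rightarrow> real) \<Rightarrow> (real \<Rightarrow> real) \<times> (real \<Rightarrow> real) \<Rightarrow> real" where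
  "Phi R = (\<lambda>(f, h). LINT x|nu01. U_op nu01 R f x * h x)"

lemma vwt_eq: "very_weak_topology nu01 =
  pullback_topology (nonsing_aut nu01) (\<lambda>R. restrict (Phi R) (wot_pairs nu01))
    (product_topology (\<lambda>_. euclideanreal) (wot_pairs nu01))"
  unfolding very_weak_topology_def Phi_def ..

lemma nbhd_basic:
  assumes U: "openin (very_weak_topology nu01) U" and R0: "R0 \<in> U"
  shows "\<exists>J d. finite J \<and> J \<subseteq> wot_pairs nu01 \<and> d > 0 \<and>
     (\<forall>R\<in>nonsing_aut nu01. (\<forall>p\<in>J. \<bar>Phi R p - Phi R0 p\<bar> < d) \<longrightarrow> R \<in> U)"
proof -
  let ?W = "wot_pairs nu01"
  let ?F = "\<lambda>R. restrict (Phi R) ?W"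
  obtain Ob where O: "openin (product_topology (\<lambda>_. euclideanreal) ?W) Ob" and UO: "U = ?F -` Ob \<inter> nonsing_aut nu01"
    using U unfolding vwt_eq openin_pullback_topology by blast
  have FO: "?F R0 \<in> Ob" and R0n: "R0 \<in> nonsing_aut nu01" using R0 UO by auto
  obtain V where fin: "finite {i \<in> ?W. V i \<noteq> topspace euclideanreal}" and op: "\<forall>i\<in>?W. openin euclideanreal (V i)"
    and inV: "?F R0 \<in> Pi\<^sub>E ?W V" and VO: "Pi\<^sub>E ?W V \<subseteq> Ob"
    using O FO unfolding openin_product_topology_alt by blast
  define J where "J = {i \<in> ?W. V i \<noteq> topspace euclideanreal}"
  have "\<forall>i\<in>J. \<exists>e>0. ball (Phi R0 i) e \<subseteq> V i"
  proof
    fix i assume i: "i \<in> J"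
    then have "open (V i)" "Phi R0 i \<in> V i" using op inV by (auto simp: J_def PiE_iff)
    then show "\<exists>e>0. ball (Phi R0 i) e \<subseteq> V i" by (simp add: open_contains_ball)
  qed
  then obtain e where e: "\<And>i. i \<in> J \<Longrightarrow> e i > 0 \<and> ball (Phi R0 i) (e i) \<subseteq> V i" by metis
  define d where "d = Min (insert 1 (e ` J))"
  have finJ: "finite J" using fin by (simp add: J_def)
  have d: "d > 0" unfolding d_def using finJ e by (auto simp: Min_gr_iff)
  have dle: "d \<le> e i" if "i \<in> J" for i unfolding d_def using finJ that by (auto intro: Min_le)
  show ?thesis
  proof (intro exI[of _ J] exI[of _ d] conjI d finJ ballI impI)
    show "J \<subseteq> ?W" by (auto simp: J_def)
    fix R assume Rn: "R \<in> nonsing_aut nu01" and close: "\<forall>p\<in>J. \<bar>Phi R p - Phi R0 p\<bar> < d"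
    have "?F R \<in> Pi\<^sub>E ?W V"
    proof (rule PiE_I)
      fix i assume i: "i \<in> ?W"
      show "?F R i \<in> V i"
      proof (cases "i \<in> J")
        case True
        then have "\<bar>Phi R i - Phi R0 i\<bar> < e i" using close dle[OF True] by fastforce
        then have "Phi R i \<in> ball (Phi R0 i) (e i)" by (simp add: dist_real_def abs_minus_commute)
        then show ?thesis using e[OF True] i by auto
      next
        case False
        then show ?thesis using i by (simp add: J_def)
      qed
    qed auto
    then have "?F R \<in> Ob" using VO by (rule subsetD[rotated])
    then show "R \<in> U" using Rn UO by simp
  qed
qed

lemma id_nonsing: "id \<in> nonsing_aut nu01"
  unfolding nonsing_aut_def
proof (intro CollectI conjI ballI)
  show "bij_betw id (space nu01) (space nu01)" by simp
  show "id \<in> nu01 \<rightarrow>\<^sub>M nu01" by simp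
  show "inv_into (space nu01) id \<in> nu01 \<rightarrow>\<^sub>M nu01"
    by (subst measurable_cong[where g="\<lambda>x. x"]) (auto intro: inv_into_f_eq)
  fix A assume "A \<in> sets nu01"
  show "(emeasure (distr nu01 nu01 id) A = 0) = (emeasure nu01 A = 0)"
    by (simp add: id_def distr_id)
qed

lemma Phi_eq:
  assumes R: "R \<in> nonsing_aut nu01" and p: "p \<in> wot_pairs nu01"
  shows "Phi R p = (LINT x|nu01. fst p x * snd p (R x))"
proof -
  obtain f h where fh: "p = (f, h)" by (cases p)
  have f: "integrable nu01 f" and h: "h \<in> borel_measurable nu01" using p fh by (auto simp: wot_pairs_def Linfty_def)
  show ?thesis unfolding fh Phi_def using U_op_integral[OF R f h] by simp
qed

lemma moved_mono: "BB \<subseteq> BB' \<Longrightarrow> moved R BB \<subseteq> moved R BB'"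
  unfolding moved_def by blast

lemma multi_control:
  assumes J: "finite J" "J \<subseteq> wot_pairs nu01" and e: "e > 0"
  shows "\<exists>BB d. finite BB \<and> BB \<subseteq> sets nu01 \<and> d > 0 \<and>
    (\<forall>R\<in>nonsing_aut nu01. measure nu01 (moved R BB) < d \<longrightarrow> (\<forall>p\<in>J. \<bar>Phi R p - Phi id p\<bar> < e))"
proof -
  have "\<forall>p\<in>J. \<exists>BB d. finite BB \<and> BB \<subseteq> sets nu01 \<and> d > 0 \<and>
    (\<forall>R\<in>nonsing_aut nu01. measure nu01 (moved R BB) < d \<longrightarrow> \<bar>Phi R p - Phi id p\<bar> < e)"
  proof
    fix p assume pJ: "p \<in> J"
    then have p: "p \<in> wot_pairs nu01" using J by auto
    obtain f h where fh: "p = (f, h)" by (cases p)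
    have f: "integrable nu01 f" and h: "h \<in> Linfty nu01" using p fh by (auto simp: wot_pairs_def)
    obtain BB d where BB: "finite BB" "BB \<subseteq> sets nu01" "d > 0" and
      c: "\<forall>R\<in>nonsing_aut nu01. measure nu01 (moved R BB) < d \<longrightarrow>
       \<bar>(LINT x|nu01. f x * h (R x)) - (LINT x|nu01. f x * h x)\<bar> < e"
      using pair_control[OF f h e] by blast
    show "\<exists>BB d. finite BB \<and> BB \<subseteq> sets nu01 \<and> d > 0 \<and>
      (\<forall>R\<in>nonsing_aut nu01. measure nu01 (moved R BB) < d \<longrightarrow> \<bar>Phi R p - Phi id p\<bar> < e)"
    proof (intro exI[of _ BB] exI[of _ d] conjI BB ballI impI)
      fix R assume R: "R \<in> nonsing_aut nu01" and m: "measure nu01 (moved R BB) < d"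
      have "Phi R p = (LINT x|nu01. f x * h (R x))" using Phi_eq[OF R p] fh by simp
      moreover have "Phi id p = (LINT x|nu01. f x * h x)" using Phi_eq[OF id_nonsing p] fh by simp
      ultimately show "\<bar>Phi R p - Phi id p\<bar> < e" using c R m by simp
    qed
  qed
  then obtain BBf df where BBf: "\<And>p. p \<in> J \<Longrightarrow> finite (BBf p) \<and> BBf p \<subseteq> sets nu01 \<and> df p > 0 \<and>
    (\<forall>R\<in>nonsing_aut nu01. measure nu01 (moved R (BBf p)) < df p \<longrightarrow> \<bar>Phi R p - Phi id p\<bar> < e)"
    by metis
  define BB where "BB = (\<Union>p\<in>J. BBf p)"
  define d where "d = Min (insert 1 (df ` J))"
  have d: "d > 0" unfolding d_def using J BBf by (auto simp: Min_gr_iff)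
  have dle: "d \<le> df p" if "p \<in> J" for p unfolding d_def using J that by (auto intro: Min_le)
  have BBs: "BB \<subseteq> sets nu01" "finite BB" unfolding BB_def using BBf J by auto
  show ?thesis
  proof (intro exI[of _ BB] exI[of _ d] conjI d BBs ballI impI)
    fix R p assume R: "R \<in> nonsing_aut nu01" and m: "measure nu01 (moved R BB) < d" and p: "p \<in> J"
    have "moved R (BBf p) \<subseteq> moved R BB" unfolding BB_def using p by (intro moved_mono) auto
    moreover have "moved R BB \<in> sets nu01" by (rule moved_sets[OF R BBs(2) BBs(1)])
    ultimately have "measure nu01 (moved R (BBf p)) \<le> measure nu01 (moved R BB)"
      by (rule nu.finite_measure_mono)
    then have "measure nu01 (moved R (BBf p)) < df p" using m dle[OF p] by simp
    then show "\<bar>Phi R p - Phi id p\<bar> < e" using BBf[OF p] R by blast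
  qed
qed

theorem lemma6p1:
  shows "\<not> continuous_map
           (prod_topology (very_weak_topology nu01) (very_weak_topology nu01))
           (very_weak_topology nu01) (\<lambda>(S, T). S \<circ> T)"
proof
  assume c: "continuous_map
           (prod_topology (very_weak_topology nu01) (very_weak_topology nu01))
           (very_weak_topology nu01) (\<lambda>(S, T). S \<circ> T)"
  let ?VW = "very_weak_topology nu01"
  let ?W = "wot_pairs nu01"
  let ?F = "\<lambda>R. restrict (Phi R) ?W"
  let ?P = "product_topology (\<lambda>_. euclideanreal) ?W"
  define A :: "real set" where "A = {0..1/2}"
  define p0 where "p0 = (indicator A :: real \<Rightarrow> real, indicator A :: real \<Rightarrow> real)"
  have Asets: "A \<in> sets nu01" by (simp add: A_def sets_nu01_iff)
  have p0W: "p0 \<in> ?W"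
  proof -
    have "integrable nu01 (indicator A :: real \<Rightarrow> real)"
      using Asets by (intro integrable_real_indicator) (auto simp: less_top[symmetric])
    moreover have "(indicator A :: real \<Rightarrow> real) \<in> Linfty nu01"
      unfolding Linfty_def using Asets by (auto intro!: exI[of _ 1] simp: indicator_def)
    ultimately show ?thesis by (simp add: p0_def wot_pairs_def)
  qed
  have topVW: "topspace ?VW = nonsing_aut nu01"
    unfolding vwt_eq topspace_pullback_topology by auto
  define V where "V = {R \<in> nonsing_aut nu01. \<bar>Phi R p0 - 1/2\<bar> < 1/8}"
  have Vo: "openin ?VW V"
  proof -
    let ?Z = "{z \<in> topspace ?P. z p0 \<in> ball (1/2) (1/8)}"
    have "openin ?P ?Z"
      by (rule openin_continuous_map_preimage[OF continuous_map_product_projection[OF p0W]]) simp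
    moreover have "V = ?F -` ?Z \<inter> nonsing_aut nu01"
      using p0W by (auto simp: V_def dist_real_def abs_minus_commute)
    ultimately show ?thesis unfolding vwt_eq openin_pullback_topology by blast
  qed
  have Po: "openin (prod_topology ?VW ?VW) {x \<in> topspace (prod_topology ?VW ?VW). (\<lambda>(S, T). S \<circ> T) x \<in> V}"
    by (rule openin_continuous_map_preimage[OF c Vo])
  have Phi_id_p0: "Phi id p0 = 1/2"
  proof -
    have "Phi id p0 = (LINT x|nu01. indicator A x * indicator A x)" using Phi_eq[OF id_nonsing p0W] by (simp add: p0_def)
    also have "\<dots> = (LINT x|nu01. indicator A x)" by (rule Bochner_Integration.integral_cong) (auto simp: indicator_def)
    also have "\<dots> = 1/2" by (simp add: A_def measure_nu01)
    finally show ?thesis .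
  qed
  have "(id, id) \<in> {x \<in> topspace (prod_topology ?VW ?VW). (\<lambda>(S, T). S \<circ> T) x \<in> V}"
    using id_nonsing Phi_id_p0 by (simp add: topVW V_def)
  then obtain U1 U2 where U1: "openin ?VW U1" and U2: "openin ?VW U2" and iU: "id \<in> U1" "id \<in> U2"
    and UP: "U1 \<times> U2 \<subseteq> {x \<in> topspace (prod_topology ?VW ?VW). (\<lambda>(S, T). S \<circ> T) x \<in> V}"
  proof -
    have "\<forall>x y. (x, y) \<in> {x \<in> topspace (prod_topology ?VW ?VW). (\<lambda>(S, T). S \<circ> T) x \<in> V} \<longrightarrow>
      (\<exists>U1 U2. openin ?VW U1 \<and> openin ?VW U2 \<and> x \<in> U1 \<and> y \<in> U2 \<and> U1 \<times> U2 \<subseteq> {x \<in> topspace (prod_topology ?VW ?VW). (\<lambda>(S, T). S \<circ> T) x \<in> V})"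
      using Po by (simp only: openin_prod_topology_alt)
    then have "\<exists>U1 U2. openin ?VW U1 \<and> openin ?VW U2 \<and> id \<in> U1 \<and> id \<in> U2 \<and> U1 \<times> U2 \<subseteq> {x \<in> topspace (prod_topology ?VW ?VW). (\<lambda>(S, T). S \<circ> T) x \<in> V}"
      using \<open>(id, id) \<in> _\<close> by (elim allE impE) assumption+
    then show ?thesis using that by blast
  qed
  obtain J1 d1 where J1: "finite J1" "J1 \<subseteq> ?W" "d1 > 0" and c1: "\<forall>R\<in>nonsing_aut nu01. (\<forall>p\<in>J1. \<bar>Phi R p - Phi id p\<bar> < d1) \<longrightarrow> R \<in> U1"
    using nbhd_basic[OF U1 iU(1)] by blast
  obtain J2 d2 where J2: "finite J2" "J2 \<subseteq> ?W" "d2 > 0" and c2: "\<forall>R\<in>nonsing_aut nu01. (\<forall>p\<in>J2. \<bar>Phi R p - Phi id p\<bar> < d2) \<longrightarrow> R \<in> U2"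
    using nbhd_basic[OF U2 iU(2)] by blast
  obtain BB d where BB: "finite BB" "BB \<subseteq> sets nu01" "d > 0" and
    cc: "\<forall>R\<in>nonsing_aut nu01. measure nu01 (moved R BB) < d \<longrightarrow> (\<forall>p\<in>J1 \<union> J2. \<bar>Phi R p - Phi id p\<bar> < min d1 d2)"
    using multi_control[of "J1 \<union> J2" "min d1 d2"] J1 J2 by auto
  have inU: "R \<in> U1 \<and> R \<in> U2" if R: "R \<in> nonsing_aut nu01" and m: "measure nu01 (moved R BB) < d" for R
  proof -
    have "\<forall>p\<in>J1 \<union> J2. \<bar>Phi R p - Phi id p\<bar> < min d1 d2" using cc R m by blast
    then have "\<forall>p\<in>J1. \<bar>Phi R p - Phi id p\<bar> < d1" "\<forall>p\<in>J2. \<bar>Phi R p - Phi id p\<bar> < d2" by auto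
    then show ?thesis using c1 c2 R by blast
  qed
  obtain N :: nat where N: "1 / d < real N" using reals_Archimedean2 by blast
  define K where "K = N + 2"
  have K2: "K \<ge> 2" by (simp add: K_def)
  have Kd: "1 / real K < d"
  proof -
    have "0 < 1 / d" using BB by simp
    then have "real N > 0" using N by linarith
    have "1 / d < real K" using N by (simp add: K_def)
    then show ?thesis using BB \<open>real N > 0\<close> by (simp add: field_simps K_def)
  qed
  define eta where "eta = d / ((real K + 3) / 2 * (real (card BB) + 1))"
  have eta: "eta > 0" using BB by (simp add: eta_def)
  have "\<forall>B\<in>BB. \<exists>m G. cellinv m G \<and> measure nu01 (symd B G \<inter> {0..1}) < eta"
  proof
    fix B assume "B \<in> BB"
    then have "B \<in> sets borel" using BB by (auto simp: sets_nu01_iff)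
    then show "\<exists>m G. cellinv m G \<and> measure nu01 (symd B G \<inter> {0..1}) < eta"
      using approx_borel eta unfolding approx_grid_def by blast
  qed
  then obtain mB where "\<forall>B\<in>BB. \<exists>G. cellinv (mB B) G \<and> measure nu01 (symd B G \<inter> {0..1}) < eta"
    by (rule bchoice[elim_format]) blast
  then obtain GB where GB': "\<forall>B\<in>BB. cellinv (mB B) (GB B) \<and> measure nu01 (symd B (GB B) \<inter> {0..1}) < eta"
    by (rule bchoice[elim_format]) blast
  have GB: "cellinv (mB B) (GB B) \<and> measure nu01 (symd B (GB B) \<inter> {0..1}) < eta" if "B \<in> BB" for B
    using GB' that by blast
  define n where "n = 1 + (\<Sum>B\<in>BB. mB B)"
  have n1: "n \<ge> 1" by (simp add: n_def)
  have cn: "cellinv n (GB B)" if "B \<in> BB" for B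
  proof -
    have "mB B \<le> (\<Sum>B\<in>BB. mB B)" using BB(1) that by (intro member_le_sum) auto
    then have "mB B \<le> n" by (simp add: n_def)
    then show ?thesis using GB[OF that] cellinv_mono by blast
  qed
  interpret TS n K by standard (use n1 K2 in auto)
  have Tm: "measure nu01 (moved T BB) < d"
  proof -
    have "measure nu01 (moved T BB) \<le> (\<Sum>B\<in>BB. (real K + 3) / 2 * measure nu01 (symd B (GB B) \<inter> {0..1}))"
      by (rule moved_T_bound[OF BB(1) BB(2) cn])
    also have "\<dots> \<le> (\<Sum>B\<in>BB. (real K + 3) / 2 * eta)"
    proof (rule sum_mono)
      fix B assume B: "B \<in> BB"
      have "measure nu01 (symd B (GB B) \<inter> {0..1}) \<le> eta" using GB[OF B] by linarith
      then show "(real K + 3) / 2 * measure nu01 (symd B (GB B) \<inter> {0..1}) \<le> (real K + 3) / 2 * eta"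
        by (rule mult_left_mono) simp
    qed
    also have "\<dots> = real (card BB) * ((real K + 3) / 2 * eta)" by simp
    also have "\<dots> = d * (real (card BB) / (real (card BB) + 1))"
    proof -
      have k0: "(real K + 3) / 2 > 0" by simp
      have den: "(real K + 3) / 2 * (real (card BB) + 1) \<noteq> 0" using k0 by simp
      have e1: "eta * ((real K + 3) / 2 * (real (card BB) + 1)) = d"
        unfolding eta_def using den by simp
      then have "((real K + 3) / 2 * eta) * (real (card BB) + 1) = d" by (simp only: ac_simps)
      moreover have "real (card BB) + 1 \<noteq> 0" by simp
      ultimately have h: "(real K + 3) / 2 * eta = d / (real (card BB) + 1)" by (simp add: eq_divide_eq)
      show ?thesis unfolding h by simp
    qed
    also have "\<dots> < d * 1"
    proof (rule mult_strict_left_mono)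
      have "real (card BB) < real (card BB) + 1" by simp
      then show "real (card BB) / (real (card BB) + 1) < 1" by (simp add: divide_less_eq)
      show "0 < d" by (rule BB(3))
    qed
    also have "\<dots> = d" by simp
    finally show ?thesis .
  qed
  have Sm: "measure nu01 (moved S BB) < d" using moved_S_bound[of BB] Kd by linarith
  have "S \<in> U1" using inU[OF S_nonsing Sm] by blast
  moreover have "T \<in> U2" using inU[OF T_nonsing Tm] by blast
  ultimately have "(S, T) \<in> U1 \<times> U2" by (rule SigmaI)
  then have "(S, T) \<in> {x \<in> topspace (prod_topology ?VW ?VW). (\<lambda>(S, T). S \<circ> T) x \<in> V}"
    using UP by (rule subsetD[rotated])
  then have "(\<lambda>(S, T). S \<circ> T) (S, T) \<in> V" by (simp only: mem_Collect_eq)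
  then have STV: "S \<circ> T \<in> V" by (simp only: case_prod_conv)
  then have STn: "S \<circ> T \<in> nonsing_aut nu01" and close: "\<bar>Phi (S \<circ> T) p0 - 1/2\<bar> < 1/8"
    by (auto simp: V_def)
  define Y where "Y = {x\<in>{0..1/2}. S (T x) \<in> {0..1/2::real}}"
  have Ys: "Y \<in> sets nu01"
  proof -
    have "Y = (T -` (S -` A \<inter> {0..1}) \<inter> {0..1}) \<inter> A"
    proof (intro set_eqI iffI)
      fix x assume "x \<in> Y"
      then have x: "x \<in> {0..1/2}" "S (T x) \<in> {0..1/2}" unfolding Y_def by blast+
      then have "x \<in> {0..1}" by auto
      then have "T x \<in> {0..1}" by (rule T_in)
      then show "x \<in> (T -` (S -` A \<inter> {0..1}) \<inter> {0..1}) \<inter> A" using x \<open>x \<in> {0..1}\<close> unfolding A_def by blast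
    next
      fix x assume "x \<in> (T -` (S -` A \<inter> {0..1}) \<inter> {0..1}) \<inter> A"
      then show "x \<in> Y" unfolding Y_def A_def by blast
    qed
    moreover have "S -` A \<inter> {0..1} \<in> sets nu01" using S_meas Asets by (auto simp: measurable_def)
    then have "T -` (S -` A \<inter> {0..1}) \<inter> {0..1} \<in> sets nu01" using T_meas by (auto simp: measurable_def)
    ultimately show ?thesis using Asets by auto
  qed
  have "Phi (S \<circ> T) p0 = (LINT x|nu01. indicator A x * indicator A (S (T x)))"
    using Phi_eq[OF STn p0W] by (simp add: p0_def)
  also have "\<dots> = (LINT x|nu01. indicator Y x)"
  proof (rule Bochner_Integration.integral_cong)
    fix x
    show "indicator A x * indicator A (S (T x)) = (indicator Y x :: real)"
      unfolding Y_def A_def by (cases "x \<in> {0..1/2::real}"; cases "S (T x) \<in> {0..1/2::real}") simp_all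
  qed simp
  also have "\<dots> = measure nu01 Y"
  proof -
    have "Y \<inter> {0..1} = Y" unfolding Y_def by auto
    then show ?thesis by simp
  qed
  also have "\<dots> \<le> 1/4" unfolding Y_def by (rule ST_small)
  finally have "Phi (S \<circ> T) p0 \<le> 1/4" .
  then show False using close by linarith
qed

end
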